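(* Let $U$ be a discrete group with torsion and $e\in\mathbb{C}[U]$ a nontrivial projection; let $T=et+t^{-1}e\in\mathbb{C}[U\wr\mathbb{Z}]$. For $n\ge 2$ and $1\le m\le n-1$ define $r_{m,n}=\sum_{i=1}^{n-1}\beta^{(n)}_{m,i}t^iq_n$ and $p_{m,n}=r_{m,n}r_{m,n}^*$. Then $(p_{m,n}\mid n\ge 2,\ 1\le m\le n-1)$ is a family of pairwise orthogonal projections in $\mathbb{C}[U\wr\mathbb{Z}]$ which is complete, that is, $\sum_{n\ge 2}\sum_{m=1}^{n-1}\mathrm{tr}_{U\wr\mathbb{Z}}(p_{m,n})=1$. Moreover, for $1\le m\le n-1$, $T\,p_{m,n}=\lambda_{m,n}p_{m,n}$.
   Context: $U\wr\mathbb{Z}=(\bigoplus_{i\in\mathbb{Z}}U)\rtimes C_\infty$, where $C_\infty$ is infinite cyclic with generator $t$ acting by the shift $t^{-1}((g_n)_{n})t=(g_{n-1})_n$; $U$ is identified with the subgroup of elements $(\dots,1,u,1,\dots)$ with $u$ in position $0$. A nontrivial projection means $e=e^*=e^2$, $e\ne0,1$. $\mathrm{tr}_{U\wr\mathbb{Z}}(a)$ is the coefficient of $1$ in $a\in\mathbb{C}[U\wr\mathbb{Z}]$. Put $e_i=t^{-i}et^i$, $f_i=1-e_i$, and $q_n=f_1e_2\cdots e_{n-1}f_n$ for $n\ge2$. $\lambda_{m,n}=2\cos(\frac mn\pi)$. For $n\ge 2$, $A_n$ is the $(n-1)\times(n-1)$ matrix with entries $\alpha_{i,j}=1$ if $|i-j|=1$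 and $0$ otherwise, and $B_n=(\beta^{(n)}_{i,j})_{1\le i,j\le n-1}$ is a real orthogonal matrix such that $B_nA_nB_n^*$ is the diagonal matrix with diagonal entries $\lambda_{1,n},\dots,\lambda_{n-1,n}$ in this order (these are the eigenvalues of $A_n$). *)

theory Defs
  imports Complex_Main "HOL-Algebra.Group"
begin

text \<open>An element of the complex group ring C[G] is a finitely supported function
  carrier G -> complex (extended by 0 outside the carrier).\<close>

definition gr_elem :: "('g,'z) monoid_scheme \<Rightarrow> ('g \<Rightarrow> complex) \<Rightarrow> bool" where
  "gr_elem G a \<longleftrightarrow> finite {x. a x \<noteq> 0} \<and> {x. a x \<noteq> 0} \<subseteq> carrier G"

definition gr_of :: "('g,'z) monoid_scheme \<Rightarrow> 'g \<Rightarrow> ('g \<Rightarrow> complex)" where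
  "gr_of G g = (\<lambda>x. if x = g then 1 else 0)"

definition gr_one :: "('g,'z) monoid_scheme \<Rightarrow> ('g \<Rightarrow> complex)" where
  "gr_one G = gr_of G \<one>\<^bsub>G\<^esub>"

definition gr_zero :: "'g \<Rightarrow> complex" where
  "gr_zero = (\<lambda>_. 0)"

definition gr_add :: "('g \<Rightarrow> complex) \<Rightarrow> ('g \<Rightarrow> complex) \<Rightarrow> ('g \<Rightarrow> complex)" where
  "gr_add a b = (\<lambda>x. a x + b x)"

definition gr_diff :: "('g \<Rightarrow> complex) \<Rightarrow> ('g \<Rightarrow> complex) \<Rightarrow> ('g \<Rightarrow> complex)" where
  "gr_diff a b = (\<lambda>x. a x - b x)"

definition gr_scale :: "complex \<Rightarrow> ('g \<Rightarrow> complex) \<Rightarrow> ('g \<Rightarrow> complex)" where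
  "gr_scale c a = (\<lambda>x. c * a x)"

definition gr_mult :: "('g,'z) monoid_scheme \<Rightarrow> ('g \<Rightarrow> complex) \<Rightarrow> ('g \<Rightarrow> complex) \<Rightarrow> ('g \<Rightarrow> complex)" where
  "gr_mult G a b = (\<lambda>x. if x \<in> carrier G
      then (\<Sum>y\<in>{y\<in>carrier G. a y \<noteq> 0}. a y * b (inv\<^bsub>G\<^esub> y \<otimes>\<^bsub>G\<^esub> x)) else 0)"

definition gr_star :: "('g,'z) monoid_scheme \<Rightarrow> ('g \<Rightarrow> complex) \<Rightarrow> ('g \<Rightarrow> complex)" where
  "gr_star G a = (\<lambda>x. if x \<in> carrier G then cnj (a (inv\<^bsub>G\<^esub> x)) else 0)"

definition gr_prod :: "('g,'z) monoid_scheme \<Rightarrow> ('g \<Rightarrow> complex) list \<Rightarrow> ('g \<Rightarrow> complex)" where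
  "gr_prod G xs = foldr (gr_mult G) xs (gr_one G)"

definition gr_tr :: "('g,'z) monoid_scheme \<Rightarrow> ('g \<Rightarrow> complex) \<Rightarrow> complex" where
  "gr_tr G a = a \<one>\<^bsub>G\<^esub>"

definition gr_map :: "('g,'z) monoid_scheme \<Rightarrow> ('h,'w) monoid_scheme \<Rightarrow> ('g \<Rightarrow> 'h)
    \<Rightarrow> ('g \<Rightarrow> complex) \<Rightarrow> ('h \<Rightarrow> complex)" where
  "gr_map G H \<phi> a = (\<lambda>y. if y \<in> carrier H
      then (\<Sum>x\<in>{x\<in>carrier G. a x \<noteq> 0 \<and> \<phi> x = y}. a x) else 0)"

definition gr_projection :: "('g,'z) monoid_scheme \<Rightarrow> ('g \<Rightarrow> complex) \<Rightarrow> bool" where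
  "gr_projection G p \<longleftrightarrow> gr_elem G p \<and> gr_star G p = p \<and> gr_mult G p p = p"

text \<open>An element (f, k) stands for (f_n)_n * t^k, where f is finitely supported.
  Since t^{-1} (g_n)_n t = (g_{n-1})_n, we have t^k (g_n)_n t^{-k} = (g_{n+k})_n, whence
  (f,k)(g,l) = ((f_n g_{n+k})_n, k+l).\<close>
definition wreath :: "('u,'z) monoid_scheme \<Rightarrow> ((int \<Rightarrow> 'u) \<times> int) monoid" where
  "wreath U = \<lparr>carrier = {(f, k). (\<forall>n. f n \<in> carrier U) \<and> finite {n. f n \<noteq> \<one>\<^bsub>U\<^esub>}},
     monoid.mult = (\<lambda>(f, k) (g, l). (\<lambda>n. f n \<otimes>\<^bsub>U\<^esub> g (n + k), k + l)),
     one = (\<lambda>_. \<one>\<^bsub>U\<^esub>, 0)\<rparr>"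

definition wr_t :: "('u,'z) monoid_scheme \<Rightarrow> (int \<Rightarrow> 'u) \<times> int" where
  "wr_t U = (\<lambda>_. \<one>\<^bsub>U\<^esub>, 1)"

definition wr_emb :: "('u,'z) monoid_scheme \<Rightarrow> 'u \<Rightarrow> (int \<Rightarrow> 'u) \<times> int" where
  "wr_emb U u = ((\<lambda>n. if n = 0 then u else \<one>\<^bsub>U\<^esub>), 0)"

definition wr_tpow :: "('u,'z) monoid_scheme \<Rightarrow> int \<Rightarrow> ((int \<Rightarrow> 'u) \<times> int \<Rightarrow> complex)" where
  "wr_tpow U i = gr_of (wreath U) (wr_t U [^]\<^bsub>wreath U\<^esub> i)"

definition wr_e :: "('u,'z) monoid_scheme \<Rightarrow> ('u \<Rightarrow> complex) \<Rightarrow> int \<Rightarrow> ((int \<Rightarrow> 'u) \<times> int \<Rightarrow> complex)" where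
  "wr_e U e i = gr_mult (wreath U) (gr_mult (wreath U) (wr_tpow U (- i))
       (gr_map U (wreath U) (wr_emb U) e)) (wr_tpow U i)"

definition wr_f :: "('u,'z) monoid_scheme \<Rightarrow> ('u \<Rightarrow> complex) \<Rightarrow> int \<Rightarrow> ((int \<Rightarrow> 'u) \<times> int \<Rightarrow> complex)" where
  "wr_f U e i = gr_diff (gr_one (wreath U)) (wr_e U e i)"

definition wr_q :: "('u,'z) monoid_scheme \<Rightarrow> ('u \<Rightarrow> complex) \<Rightarrow> nat \<Rightarrow> ((int \<Rightarrow> 'u) \<times> int \<Rightarrow> complex)" where
  "wr_q U e n = gr_prod (wreath U)
     ([wr_f U e 1] @ map (\<lambda>i. wr_e U e (int i)) [2..<n] @ [wr_f U e (int n)])"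

definition wr_T :: "('u,'z) monoid_scheme \<Rightarrow> ('u \<Rightarrow> complex) \<Rightarrow> ((int \<Rightarrow> 'u) \<times> int \<Rightarrow> complex)" where
  "wr_T U e = gr_add (gr_mult (wreath U) (gr_map U (wreath U) (wr_emb U) e) (wr_tpow U 1))
                     (gr_mult (wreath U) (wr_tpow U (-1)) (gr_map U (wreath U) (wr_emb U) e))"

definition lam :: "nat \<Rightarrow> nat \<Rightarrow> real" where
  "lam m n = 2 * cos (real m / real n * pi)"

definition alphaA :: "nat \<Rightarrow> nat \<Rightarrow> real" where
  "alphaA i j = (if i = j + 1 \<or> j = i + 1 then 1 else 0)"

text \<open>B n i j = beta^{(n)}_{i,j}, 1 <= i,j <= n-1: B_n real orthogonal with
  B_n A_n B_n^* = diag(lambda_{1,n}, ..., lambda_{n-1,n}).\<close>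
definition diagonalizes :: "(nat \<Rightarrow> nat \<Rightarrow> nat \<Rightarrow> real) \<Rightarrow> bool" where
  "diagonalizes B \<longleftrightarrow> (\<forall>n\<ge>2. \<forall>i\<in>{1..n-1}. \<forall>j\<in>{1..n-1}.
      (\<Sum>k\<in>{1..n-1}. B n i k * B n j k) = (if i = j then 1 else 0) \<and>
      (\<Sum>k\<in>{1..n-1}. \<Sum>l\<in>{1..n-1}. B n i k * alphaA k l * B n j l)
         = (if i = j then lam i n else 0))"

definition wr_r :: "('u,'z) monoid_scheme \<Rightarrow> ('u \<Rightarrow> complex) \<Rightarrow> (nat \<Rightarrow> nat \<Rightarrow> nat \<Rightarrow> real)
    \<Rightarrow> nat \<Rightarrow> nat \<Rightarrow> ((int \<Rightarrow> 'u) \<times> int \<Rightarrow> complex)" where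
  "wr_r U e B m n = (\<lambda>x. \<Sum>i\<in>{1..n-1}.
      complex_of_real (B n m i) * gr_mult (wreath U) (wr_tpow U (int i)) (wr_q U e n) x)"

definition wr_p :: "('u,'z) monoid_scheme \<Rightarrow> ('u \<Rightarrow> complex) \<Rightarrow> (nat \<Rightarrow> nat \<Rightarrow> nat \<Rightarrow> real)
    \<Rightarrow> nat \<Rightarrow> nat \<Rightarrow> ((int \<Rightarrow> 'u) \<times> int \<Rightarrow> complex)" where
  "wr_p U e B m n = gr_mult (wreath U) (wr_r U e B m n) (gr_star (wreath U) (wr_r U e B m n))"

end

theory Submission
  imports Defs "HOL-Library.FuncSet" "Jordan_Normal_Form.Determinant"
begin

context group begin

lemma cancel_aux[simp]: "g \<in> carrier G \<Longrightarrow> x \<in> carrier G \<Longrightarrow> g \<otimes> (inv g \<otimes> x) = x"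
  "g \<in> carrier G \<Longrightarrow> x \<in> carrier G \<Longrightarrow> inv g \<otimes> (g \<otimes> x) = x"
  by (simp_all add: m_assoc[symmetric])

lemma solve_aux: "y \<in> carrier G \<Longrightarrow> x \<in> carrier G \<Longrightarrow> h \<in> carrier G \<Longrightarrow> inv y \<otimes> x = h \<Longrightarrow> y = x \<otimes> inv h"
  by (metis inv_solve_left inv_solve_right)

lemma inj_on_lmult: "z \<in> carrier G \<Longrightarrow> S \<subseteq> carrier G \<Longrightarrow> inj_on (\<lambda>w. z \<otimes> w) S"
  by (rule inj_onI) (metis Units_eq Units_l_cancel subsetD)

lemma gr_mult_eq_sum:
  assumes "finite A" "A \<subseteq> carrier G" "{y\<in>carrier G. a y \<noteq> 0} \<subseteq> A"
  shows "gr_mult G a b x = (if x \<in> carrier G then (\<Sum>y\<in>A. a y * b (inv y \<otimes> x)) else 0)"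
proof -
  have "(\<Sum>y\<in>{y\<in>carrier G. a y \<noteq> 0}. a y * b (inv y \<otimes> x)) = (\<Sum>y\<in>A. a y * b (inv y \<otimes> x))"
    by (rule sum.mono_neutral_left) (use assms in auto)
  thus ?thesis unfolding gr_mult_def by simp
qed

lemma gr_elemD: "gr_elem G a \<Longrightarrow> finite {x. a x \<noteq> 0}" "gr_elem G a \<Longrightarrow> {x. a x \<noteq> 0} \<subseteq> carrier G"
  "gr_elem G a \<Longrightarrow> x \<notin> carrier G \<Longrightarrow> a x = 0"
  unfolding gr_elem_def by auto

lemma gr_mult_elem:
  assumes "gr_elem G a"
  shows "gr_mult G a b x = (if x \<in> carrier G then (\<Sum>y\<in>{y. a y \<noteq> 0}. a y * b (inv y \<otimes> x)) else 0)"
  by (rule gr_mult_eq_sum) (use gr_elemD[OF assms] in auto)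

lemma gr_elem_mult:
  assumes a: "gr_elem G a" and b: "gr_elem G b"
  shows "gr_elem G (gr_mult G a b)"
proof -
  have "{x. gr_mult G a b x \<noteq> 0} \<subseteq> (\<lambda>(y,w). y \<otimes> w) ` ({y. a y \<noteq> 0} \<times> {w. b w \<noteq> 0})"
  proof
    fix x assume "x \<in> {x. gr_mult G a b x \<noteq> 0}"
    hence x: "x \<in> carrier G" and s: "(\<Sum>y\<in>{y. a y \<noteq> 0}. a y * b (inv y \<otimes> x)) \<noteq> 0"
      by (auto simp: gr_mult_elem[OF a] split: if_splits)
    from sum.not_neutral_contains_not_neutral[OF s] obtain y where y: "a y \<noteq> 0" "b (inv y \<otimes> x) \<noteq> 0" by auto
    have yc: "y \<in> carrier G" using y gr_elemD(2)[OF a] by auto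
    have "x = y \<otimes> (inv y \<otimes> x)" using x yc by (simp add: m_assoc[symmetric])
    thus "x \<in> (\<lambda>(y,w). y \<otimes> w) ` ({y. a y \<noteq> 0} \<times> {w. b w \<noteq> 0})" using y by force
  qed
  moreover have "finite ((\<lambda>(y,w). y \<otimes> w) ` ({y. a y \<noteq> 0} \<times> {w. b w \<noteq> 0}))"
    using gr_elemD(1)[OF a] gr_elemD(1)[OF b] by auto
  ultimately show ?thesis unfolding gr_elem_def gr_mult_def
    by (auto intro: finite_subset split: if_splits)
qed


lemma gr_mult_eq_sum_gen:
  assumes fa: "finite {y\<in>carrier G. a y \<noteq> 0}" and "finite A" "A \<subseteq> carrier G" and x: "x \<in> carrier G"
    and out: "\<And>y. y \<in> carrier G \<Longrightarrow> y \<notin> A \<Longrightarrow> a y * b (inv y \<otimes> x) = 0"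
  shows "gr_mult G a b x = (\<Sum>y\<in>A. a y * b (inv y \<otimes> x))"
proof -
  let ?S = "{y\<in>carrier G. a y \<noteq> 0}"
  have "(\<Sum>y\<in>?S. a y * b (inv y \<otimes> x)) = (\<Sum>y\<in>?S \<union> A. a y * b (inv y \<otimes> x))"
    by (rule sum.mono_neutral_left) (use assms in auto)
  also have "\<dots> = (\<Sum>y\<in>A. a y * b (inv y \<otimes> x))"
    by (rule sum.mono_neutral_right) (use assms in auto)
  finally show ?thesis unfolding gr_mult_def using x by simp
qed

lemma supp_mult_subset:
  assumes a: "gr_elem G a"
  shows "{x. gr_mult G a b x \<noteq> 0} \<subseteq> (\<lambda>(y,w). y \<otimes> w) ` ({y. a y \<noteq> 0} \<times> {w. b w \<noteq> 0})"
proof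
  fix x assume "x \<in> {x. gr_mult G a b x \<noteq> 0}"
  hence x: "x \<in> carrier G" and s: "(\<Sum>y\<in>{y. a y \<noteq> 0}. a y * b (inv y \<otimes> x)) \<noteq> 0"
    by (auto simp: gr_mult_elem[OF a] split: if_splits)
  from sum.not_neutral_contains_not_neutral[OF s] obtain y where y: "a y \<noteq> 0" "b (inv y \<otimes> x) \<noteq> 0" by auto
  have yc: "y \<in> carrier G" using y gr_elemD(2)[OF a] by auto
  have "x = y \<otimes> (inv y \<otimes> x)" using x yc by (simp add: m_assoc[symmetric])
  thus "x \<in> (\<lambda>(y,w). y \<otimes> w) ` ({y. a y \<noteq> 0} \<times> {w. b w \<noteq> 0})" using y by force
qed

lemma gr_mult_assoc:
  assumes a: "gr_elem G a" and b: "gr_elem G b" and c: "gr_elem G c"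
  shows "gr_mult G (gr_mult G a b) c = gr_mult G a (gr_mult G b c)"
proof
  fix x
  let ?Sa = "{y. a y \<noteq> 0}" and ?Sb = "{y. b y \<noteq> 0}"
  let ?P = "(\<lambda>(y,w). y \<otimes> w) ` (?Sa \<times> ?Sb)"
  have Sa: "finite ?Sa" "?Sa \<subseteq> carrier G" and Sb: "finite ?Sb" "?Sb \<subseteq> carrier G"
    using gr_elemD[OF a] gr_elemD[OF b] by auto
  have P: "finite ?P" "?P \<subseteq> carrier G" using Sa Sb by auto
  show "gr_mult G (gr_mult G a b) c x = gr_mult G a (gr_mult G b c) x"
  proof (cases "x \<in> carrier G")
    case False thus ?thesis unfolding gr_mult_def by simp
  next
    case x: True
    have "gr_mult G (gr_mult G a b) c x = (\<Sum>y\<in>?P. gr_mult G a b y * c (inv y \<otimes> x))"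
      using gr_mult_eq_sum[OF P, of "gr_mult G a b" c x] supp_mult_subset[OF a, of b] x by auto
    also have "\<dots> = (\<Sum>y\<in>?P. \<Sum>z\<in>?Sa. a z * b (inv z \<otimes> y) * c (inv y \<otimes> x))"
      using P by (intro sum.cong refl) (auto simp: gr_mult_elem[OF a] sum_distrib_right)
    also have "\<dots> = (\<Sum>z\<in>?Sa. a z * (\<Sum>y\<in>?P. b (inv z \<otimes> y) * c (inv y \<otimes> x)))"
      by (subst sum.swap) (simp add: sum_distrib_left mult.assoc)
    also have "\<dots> = (\<Sum>z\<in>?Sa. a z * gr_mult G b c (inv z \<otimes> x))"
    proof (intro sum.cong refl arg_cong2[where f="(*)"])
      fix z assume z: "z \<in> ?Sa"
      hence zc: "z \<in> carrier G" using Sa by auto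
      have "(\<Sum>y\<in>?P. b (inv z \<otimes> y) * c (inv y \<otimes> x)) = (\<Sum>y\<in>(\<lambda>w. z \<otimes> w) ` ?Sb. b (inv z \<otimes> y) * c (inv y \<otimes> x))"
      proof (rule sum.mono_neutral_right[OF P(1)])
        show "(\<lambda>w. z \<otimes> w) ` ?Sb \<subseteq> ?P" using z by auto
        show "\<forall>i\<in>?P - (\<lambda>w. z \<otimes> w) ` ?Sb. b (inv z \<otimes> i) * c (inv i \<otimes> x) = 0"
        proof
          fix y assume y: "y \<in> ?P - (\<lambda>w. z \<otimes> w) ` ?Sb"
          hence yc: "y \<in> carrier G" using P by auto
          have "y = z \<otimes> (inv z \<otimes> y)" using yc zc by (simp add: m_assoc[symmetric])
          hence "b (inv z \<otimes> y) = 0" using y by (metis (mono_tags, lifting) DiffD2 image_eqI mem_Collect_eq)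
          thus "b (inv z \<otimes> y) * c (inv y \<otimes> x) = 0" by simp
        qed
      qed
      also have "\<dots> = (\<Sum>w\<in>?Sb. b (inv z \<otimes> (z \<otimes> w)) * c (inv (z \<otimes> w) \<otimes> x))"
        by (rule sum.reindex_cong[of "\<lambda>w. z \<otimes> w"]) (use zc Sb inj_on_lmult in \<open>auto\<close>)
      also have "\<dots> = (\<Sum>w\<in>?Sb. b w * c (inv w \<otimes> (inv z \<otimes> x)))"
        using zc Sb x by (intro sum.cong refl) (auto simp: m_assoc[symmetric] inv_mult_group)
      also have "\<dots> = gr_mult G b c (inv z \<otimes> x)"
        using gr_mult_elem[OF b, of c "inv z \<otimes> x"] zc x by simp
      finally show "(\<Sum>y\<in>?P. b (inv z \<otimes> y) * c (inv y \<otimes> x)) = gr_mult G b c (inv z \<otimes> x)" .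
    qed
    also have "\<dots> = gr_mult G a (gr_mult G b c) x"
      using gr_mult_elem[OF a, of "gr_mult G b c" x] x by simp
    finally show ?thesis .
  qed
qed

lemma gr_elem_of: "g \<in> carrier G \<Longrightarrow> gr_elem G (gr_of G g)"
  unfolding gr_elem_def gr_of_def by auto

lemma gr_elem_one: "gr_elem G (gr_one G)"
  unfolding gr_one_def by (simp add: gr_elem_of)

lemma gr_elem_zero: "gr_elem G gr_zero"
  unfolding gr_elem_def gr_zero_def by auto

lemma gr_of_mult_left:
  assumes g: "g \<in> carrier G"
  shows "gr_mult G (gr_of G g) b = (\<lambda>x. if x \<in> carrier G then b (inv g \<otimes> x) else 0)"
proof
  fix x
  have "{y\<in>carrier G. gr_of G g y \<noteq> 0} = {g}" using g by (auto simp: gr_of_def)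
  thus "gr_mult G (gr_of G g) b x = (if x \<in> carrier G then b (inv g \<otimes> x) else 0)"
    unfolding gr_mult_def by (simp add: gr_of_def)
qed

lemma gr_of_mult_right:
  assumes a: "gr_elem G a" and h: "h \<in> carrier G"
  shows "gr_mult G a (gr_of G h) = (\<lambda>x. if x \<in> carrier G then a (x \<otimes> inv h) else 0)"
proof
  fix x
  show "gr_mult G a (gr_of G h) x = (if x \<in> carrier G then a (x \<otimes> inv h) else 0)"
  proof (cases "x \<in> carrier G")
    case False thus ?thesis by (simp add: gr_mult_def)
  next
    case x: True
    have "gr_mult G a (gr_of G h) x = (\<Sum>y\<in>{x \<otimes> inv h}. a y * gr_of G h (inv y \<otimes> x))"
    proof (rule gr_mult_eq_sum_gen)
      show "finite {y \<in> carrier G. a y \<noteq> 0}" using gr_elemD(1)[OF a] by (auto intro: finite_subset)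
      fix y assume y: "y \<in> carrier G" "y \<notin> {x \<otimes> inv h}"
      have "inv y \<otimes> x \<noteq> h"
      proof
        assume "inv y \<otimes> x = h"
        hence "y = x \<otimes> inv h" using y x h solve_aux by blast
        thus False using y by auto
      qed
      thus "a y * gr_of G h (inv y \<otimes> x) = 0" by (simp add: gr_of_def)
    qed (use x h in auto)
    also have "\<dots> = a (x \<otimes> inv h)"
    proof -
      have "inv (x \<otimes> inv h) \<otimes> x = h" using x h by (simp add: inv_mult_group m_assoc)
      thus ?thesis by (simp add: gr_of_def)
    qed
    finally show ?thesis using x by simp
  qed
qed

lemma gr_of_of:
  assumes "g \<in> carrier G" "h \<in> carrier G"
  shows "gr_mult G (gr_of G g) (gr_of G h) = gr_of G (g \<otimes> h)"
proof
  fix x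
  show "gr_mult G (gr_of G g) (gr_of G h) x = gr_of G (g \<otimes> h) x"
    unfolding gr_of_mult_left[OF assms(1)] using assms
    by (auto simp: gr_of_def m_assoc[symmetric])
qed

lemma gr_one_mult: "gr_elem G b \<Longrightarrow> gr_mult G (gr_one G) b = b"
  unfolding gr_one_def by (rule ext) (auto simp: gr_of_mult_left gr_elemD)

lemma gr_mult_one: "gr_elem G a \<Longrightarrow> gr_mult G a (gr_one G) = a"
  unfolding gr_one_def by (rule ext) (auto simp: gr_of_mult_right gr_elemD)

lemma gr_zero_mult: "gr_mult G gr_zero b = gr_zero"
  unfolding gr_mult_def gr_zero_def by auto

lemma gr_mult_zero: "gr_mult G a gr_zero = gr_zero"
  unfolding gr_mult_def gr_zero_def by auto


lemma gr_elem_sum: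
  assumes "finite I" "\<And>i. i \<in> I \<Longrightarrow> gr_elem G (a i)"
  shows "gr_elem G (\<lambda>x. \<Sum>i\<in>I. c i * a i x)"
proof -
  have "{x. (\<Sum>i\<in>I. c i * a i x) \<noteq> 0} \<subseteq> (\<Union>i\<in>I. {x. a i x \<noteq> 0})"
    by (auto dest: sum.not_neutral_contains_not_neutral)
  moreover have "finite (\<Union>i\<in>I. {x. a i x \<noteq> 0})" "(\<Union>i\<in>I. {x. a i x \<noteq> 0}) \<subseteq> carrier G"
    using assms gr_elemD by auto
  ultimately show ?thesis unfolding gr_elem_def by (auto intro: finite_subset)
qed

lemma gr_elem_lin:
  assumes "gr_elem G a" "gr_elem G b"
  shows "gr_elem G (\<lambda>x. \<alpha> * a x + \<beta> * b x)"
proof -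
  have "{x. \<alpha> * a x + \<beta> * b x \<noteq> 0} \<subseteq> {x. a x \<noteq> 0} \<union> {x. b x \<noteq> 0}" by auto
  thus ?thesis using assms unfolding gr_elem_def by (auto intro: finite_subset)
qed

lemma gr_mult_sum_left:
  assumes I: "finite I" and a: "\<And>i. i \<in> I \<Longrightarrow> gr_elem G (a i)"
  shows "gr_mult G (\<lambda>x. \<Sum>i\<in>I. c i * a i x) b = (\<lambda>x. \<Sum>i\<in>I. c i * gr_mult G (a i) b x)"
proof
  fix x
  let ?A = "\<Union>i\<in>I. {x. a i x \<noteq> 0}"
  have A: "finite ?A" "?A \<subseteq> carrier G" using assms gr_elemD by auto
  show "gr_mult G (\<lambda>x. \<Sum>i\<in>I. c i * a i x) b x = (\<Sum>i\<in>I. c i * gr_mult G (a i) b x)"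
  proof (cases "x \<in> carrier G")
    case False thus ?thesis by (simp add: gr_mult_def)
  next
    case x: True
    have "gr_mult G (\<lambda>x. \<Sum>i\<in>I. c i * a i x) b x = (\<Sum>y\<in>?A. (\<Sum>i\<in>I. c i * a i y) * b (inv y \<otimes> x))"
      by (subst gr_mult_eq_sum[OF A]) (use x in \<open>auto dest: sum.not_neutral_contains_not_neutral\<close>)
    also have "\<dots> = (\<Sum>i\<in>I. c i * (\<Sum>y\<in>?A. a i y * b (inv y \<otimes> x)))"
      by (simp add: sum_distrib_left sum_distrib_right mult.assoc sum.swap[of _ I])
    also have "\<dots> = (\<Sum>i\<in>I. c i * gr_mult G (a i) b x)"
      by (intro sum.cong refl arg_cong2[where f="(*)"], subst gr_mult_eq_sum[OF A]) (use x in auto)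
    finally show ?thesis .
  qed
qed

lemma gr_mult_sum_right:
  assumes I: "finite I" and a: "gr_elem G a"
  shows "gr_mult G a (\<lambda>x. \<Sum>i\<in>I. c i * b i x) = (\<lambda>x. \<Sum>i\<in>I. c i * gr_mult G a (b i) x)"
  by (rule ext) (simp add: gr_mult_elem[OF a] sum_distrib_left sum_distrib_right mult.assoc mult.left_commute sum.swap[of _ I])

lemma gr_mult_lin_left:
  assumes a: "gr_elem G a" and b: "gr_elem G b"
  shows "gr_mult G (\<lambda>x. \<alpha> * a x + \<beta> * b x) c = (\<lambda>x. \<alpha> * gr_mult G a c x + \<beta> * gr_mult G b c x)"
proof
  fix x
  let ?A = "{x. a x \<noteq> 0} \<union> {x. b x \<noteq> 0}"
  have A: "finite ?A" "?A \<subseteq> carrier G" using assms gr_elemD by auto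
  show "gr_mult G (\<lambda>x. \<alpha> * a x + \<beta> * b x) c x = \<alpha> * gr_mult G a c x + \<beta> * gr_mult G b c x"
    by (subst (1 2 3) gr_mult_eq_sum[OF A]) (auto simp: sum_distrib_left sum.distrib algebra_simps)
qed

lemma gr_mult_lin_right:
  assumes a: "gr_elem G a"
  shows "gr_mult G a (\<lambda>x. \<alpha> * b x + \<beta> * c x) = (\<lambda>x. \<alpha> * gr_mult G a b x + \<beta> * gr_mult G a c x)"
  by (rule ext) (simp add: gr_mult_elem[OF a] sum_distrib_left sum.distrib algebra_simps)

lemma gr_add_lin: "gr_add a b = (\<lambda>x. 1 * a x + 1 * b x)" by (simp add: gr_add_def)
lemma gr_diff_lin: "gr_diff a b = (\<lambda>x. 1 * a x + (-1) * b x)" by (simp add: gr_diff_def)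
lemma gr_scale_lin: "gr_scale c a = (\<lambda>x. c * a x + 0 * a x)" by (simp add: gr_scale_def)

lemma gr_elem_add: "gr_elem G a \<Longrightarrow> gr_elem G b \<Longrightarrow> gr_elem G (gr_add a b)"
  unfolding gr_add_lin by (rule gr_elem_lin)
lemma gr_elem_diff: "gr_elem G a \<Longrightarrow> gr_elem G b \<Longrightarrow> gr_elem G (gr_diff a b)"
  unfolding gr_diff_lin by (rule gr_elem_lin)
lemma gr_elem_scale: "gr_elem G a \<Longrightarrow> gr_elem G (gr_scale c a)"
  unfolding gr_scale_lin by (rule gr_elem_lin)

lemma gr_mult_add_left: "gr_elem G a \<Longrightarrow> gr_elem G b \<Longrightarrow> gr_mult G (gr_add a b) c = gr_add (gr_mult G a c) (gr_mult G b c)"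
  unfolding gr_add_lin by (rule gr_mult_lin_left)
lemma gr_mult_diff_left: "gr_elem G a \<Longrightarrow> gr_elem G b \<Longrightarrow> gr_mult G (gr_diff a b) c = gr_diff (gr_mult G a c) (gr_mult G b c)"
  unfolding gr_diff_lin by (rule gr_mult_lin_left)
lemma gr_mult_scale_left: "gr_elem G a \<Longrightarrow> gr_mult G (gr_scale s a) c = gr_scale s (gr_mult G a c)"
  unfolding gr_scale_lin by (rule gr_mult_lin_left)
lemma gr_mult_add_right: "gr_elem G a \<Longrightarrow> gr_mult G a (gr_add b c) = gr_add (gr_mult G a b) (gr_mult G a c)"
  unfolding gr_add_lin by (rule gr_mult_lin_right)
lemma gr_mult_diff_right: "gr_elem G a \<Longrightarrow> gr_mult G a (gr_diff b c) = gr_diff (gr_mult G a b) (gr_mult G a c)"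
  unfolding gr_diff_lin by (rule gr_mult_lin_right)
lemma gr_mult_scale_right: "gr_elem G a \<Longrightarrow> gr_mult G a (gr_scale s b) = gr_scale s (gr_mult G a b)"
  unfolding gr_scale_lin by (rule gr_mult_lin_right)

lemma gr_elem_star:
  assumes a: "gr_elem G a" shows "gr_elem G (gr_star G a)"
proof -
  have "{x. gr_star G a x \<noteq> 0} \<subseteq> (\<lambda>y. inv y) ` {x. a x \<noteq> 0}"
  proof
    fix x assume "x \<in> {x. gr_star G a x \<noteq> 0}"
    hence x: "x \<in> carrier G" "a (inv x) \<noteq> 0" by (auto simp: gr_star_def split: if_splits)
    thus "x \<in> (\<lambda>y. inv y) ` {x. a x \<noteq> 0}" by (metis (mono_tags, lifting) image_eqI inv_inv mem_Collect_eq)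
  qed
  thus ?thesis using gr_elemD[OF a] unfolding gr_elem_def
    by (auto intro: finite_subset simp: gr_star_def split: if_splits)
qed

lemma gr_star_star: "gr_elem G a \<Longrightarrow> gr_star G (gr_star G a) = a"
  by (rule ext) (auto simp: gr_star_def gr_elemD)

lemma gr_star_of: "g \<in> carrier G \<Longrightarrow> gr_star G (gr_of G g) = gr_of G (inv g)"
  by (rule ext) (auto simp: gr_star_def gr_of_def)

lemma gr_star_one: "gr_star G (gr_one G) = gr_one G"
  by (simp add: gr_one_def gr_star_of)

lemma gr_star_sum: "gr_star G (\<lambda>x. \<Sum>i\<in>I. c i * a i x) = (\<lambda>x. \<Sum>i\<in>I. cnj (c i) * gr_star G (a i) x)"
  by (rule ext) (simp add: gr_star_def)

lemma gr_star_diff: "gr_star G (gr_diff a b) = gr_diff (gr_star G a) (gr_star G b)"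
  by (rule ext) (simp add: gr_star_def gr_diff_def)

lemma gr_star_mult:
  assumes a: "gr_elem G a" and b: "gr_elem G b"
  shows "gr_star G (gr_mult G a b) = gr_mult G (gr_star G b) (gr_star G a)"
proof
  fix x
  let ?Sa = "{y. a y \<noteq> 0}"
  have Sa: "finite ?Sa" "?Sa \<subseteq> carrier G" using gr_elemD[OF a] by auto
  show "gr_star G (gr_mult G a b) x = gr_mult G (gr_star G b) (gr_star G a) x"
  proof (cases "x \<in> carrier G")
    case False thus ?thesis by (simp add: gr_mult_def gr_star_def)
  next
    case x: True
    have "gr_star G (gr_mult G a b) x = (\<Sum>y\<in>?Sa. cnj (a y) * cnj (b (inv y \<otimes> inv x)))"
      using x by (simp add: gr_star_def gr_mult_elem[OF a])
    also have "\<dots> = (\<Sum>z\<in>(\<lambda>y. x \<otimes> y) ` ?Sa. gr_star G b z * gr_star G a (inv z \<otimes> x))"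
    proof (subst sum.reindex)
      show "inj_on (\<lambda>y. x \<otimes> y) ?Sa" using inj_on_lmult[OF x Sa(2)] .
      show "(\<Sum>y\<in>?Sa. cnj (a y) * cnj (b (inv y \<otimes> inv x))) =
          sum ((\<lambda>z. gr_star G b z * gr_star G a (inv z \<otimes> x)) \<circ> (\<lambda>y. x \<otimes> y)) ?Sa"
        using x Sa by (intro sum.cong refl) (auto simp: gr_star_def inv_mult_group m_assoc)
    qed
    also have "\<dots> = gr_mult G (gr_star G b) (gr_star G a) x"
    proof (rule gr_mult_eq_sum_gen[symmetric])
      show "finite {y \<in> carrier G. gr_star G b y \<noteq> 0}" using gr_elemD(1)[OF gr_elem_star[OF b]] by (auto intro: finite_subset)
      fix y assume y: "y \<in> carrier G" "y \<notin> (\<lambda>y. x \<otimes> y) ` ?Sa"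
      have "a (inv x \<otimes> y) = 0"
      proof (rule ccontr)
        assume "a (inv x \<otimes> y) \<noteq> 0"
        hence "x \<otimes> (inv x \<otimes> y) \<in> (\<lambda>y. x \<otimes> y) ` ?Sa" by auto
        thus False using y x by simp
      qed
      thus "gr_star G b y * gr_star G a (inv y \<otimes> x) = 0"
        using x y by (simp add: gr_star_def inv_mult_group)
    qed (use x Sa in auto)
    finally show ?thesis .
  qed
qed

lemma gr_tr_mult: assumes a: "gr_elem G a" shows "gr_tr G (gr_mult G a b) = (\<Sum>y\<in>{y. a y \<noteq> 0}. a y * b (inv y))"
  unfolding gr_tr_def gr_mult_elem[OF a] using gr_elemD(2)[OF a] by (auto intro!: sum.cong)

lemma gr_tr_comm:
  assumes a: "gr_elem G a" and b: "gr_elem G b"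
  shows "gr_tr G (gr_mult G a b) = gr_tr G (gr_mult G b a)"
proof -
  let ?Sa = "{y. a y \<noteq> 0}"
  have Sa: "finite ?Sa" "?Sa \<subseteq> carrier G" using gr_elemD[OF a] by auto
  have "gr_tr G (gr_mult G a b) = (\<Sum>y\<in>?Sa. a y * b (inv y))"
    using gr_tr_mult[OF a] .
  also have "\<dots> = (\<Sum>z\<in>(\<lambda>y. inv y) ` ?Sa. b z * a (inv z \<otimes> \<one>))"
  proof (subst sum.reindex)
    show "inj_on (\<lambda>y. inv y) ?Sa" using inv_inj Sa(2) by (auto intro: inj_on_subset)
  qed (use Sa in \<open>auto intro!: sum.cong\<close>)
  also have "\<dots> = gr_mult G b a \<one>"
  proof (rule gr_mult_eq_sum_gen[symmetric])
    show "finite {y \<in> carrier G. b y \<noteq> 0}" using gr_elemD(1)[OF b] by (auto intro: finite_subset)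
    fix y assume y: "y \<in> carrier G" "y \<notin> (\<lambda>y. inv y) ` ?Sa"
    have "a (inv y) = 0"
    proof (rule ccontr)
      assume "a (inv y) \<noteq> 0"
      hence "inv (inv y) \<in> (\<lambda>y. inv y) ` ?Sa" by auto
      thus False using y by simp
    qed
    thus "b y * a (inv y \<otimes> \<one>) = 0" using y by simp
  qed (use Sa in auto)
  finally show ?thesis by (simp add: gr_tr_def)
qed

lemma gr_tr_star_self:
  assumes a: "gr_elem G a"
  shows "gr_tr G (gr_mult G a (gr_star G a)) = (\<Sum>y\<in>{y. a y \<noteq> 0}. complex_of_real ((cmod (a y))\<^sup>2))"
  unfolding gr_tr_mult[OF a]
proof (intro sum.cong refl)
  fix y assume "y \<in> {y. a y \<noteq> 0}"
  hence "y \<in> carrier G" using gr_elemD(2)[OF a] by auto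
  thus "a y * gr_star G a (inv y) = complex_of_real ((cmod (a y))\<^sup>2)"
    by (simp add: gr_star_def complex_norm_square[symmetric])
qed

end

lemma wreath_simps:
  "carrier (wreath U) = {(f, k). (\<forall>n. f n \<in> carrier U) \<and> finite {n. f n \<noteq> \<one>\<^bsub>U\<^esub>}}"
  "(f, k) \<otimes>\<^bsub>wreath U\<^esub> (g, l) = (\<lambda>n. f n \<otimes>\<^bsub>U\<^esub> g (n + k), k + l)"
  "\<one>\<^bsub>wreath U\<^esub> = (\<lambda>_. \<one>\<^bsub>U\<^esub>, 0)"
  by (simp_all add: wreath_def)

definition wext :: "('u,'z) monoid_scheme \<Rightarrow> int set \<Rightarrow> (int \<Rightarrow> 'u) \<Rightarrow> (int \<Rightarrow> 'u)" where
  "wext U J h = (\<lambda>n. if n \<in> J then h n else \<one>\<^bsub>U\<^esub>)"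

definition ten :: "('u,'z) monoid_scheme \<Rightarrow> int set \<Rightarrow> (int \<Rightarrow> 'u \<Rightarrow> complex) \<Rightarrow> ((int \<Rightarrow> 'u) \<times> int \<Rightarrow> complex)" where
  "ten U J c = (\<lambda>(g, k). if k = 0 \<and> (\<forall>n. g n \<in> carrier U) \<and> (\<forall>n. n \<notin> J \<longrightarrow> g n = \<one>\<^bsub>U\<^esub>)
      then (\<Prod>j\<in>J. c j (g j)) else 0)"

context group begin

lemma wreath_mem: "(f, k) \<in> carrier (wreath G) \<longleftrightarrow> (\<forall>n. f n \<in> carrier G) \<and> finite {n. f n \<noteq> \<one>}"
  by (simp add: wreath_simps)

lemma wreath_group: "group (wreath G)"
proof (rule groupI)
  fix x y assume x: "x \<in> carrier (wreath G)" and y: "y \<in> carrier (wreath G)"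
  obtain f k where xf: "x = (f, k)" by (cases x)
  obtain g l where yg: "y = (g, l)" by (cases y)
  have "{n. f n \<otimes> g (n + k) \<noteq> \<one>} \<subseteq> {n. f n \<noteq> \<one>} \<union> (\<lambda>m. m - k) ` {m. g m \<noteq> \<one>}"
  proof
    fix n assume n: "n \<in> {n. f n \<otimes> g (n + k) \<noteq> \<one>}"
    show "n \<in> {n. f n \<noteq> \<one>} \<union> (\<lambda>m. m - k) ` {m. g m \<noteq> \<one>}"
    proof (cases "f n = \<one>")
      case True
      hence "g (n + k) \<noteq> \<one>" using n x y xf yg by (auto simp: wreath_simps)
      hence "n + k \<in> {m. g m \<noteq> \<one>}" by simp
      hence "(n + k) - k \<in> (\<lambda>m. m - k) ` {m. g m \<noteq> \<one>}" by (rule imageI)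
      thus ?thesis by simp
    qed simp
  qed
  moreover have "finite ({n. f n \<noteq> \<one>} \<union> (\<lambda>m. m - k) ` {m. g m \<noteq> \<one>})"
    using x y xf yg by (auto simp: wreath_simps)
  ultimately show "x \<otimes>\<^bsub>wreath G\<^esub> y \<in> carrier (wreath G)"
    using x y xf yg by (auto simp: wreath_simps intro: finite_subset)
next
  show "\<one>\<^bsub>wreath G\<^esub> \<in> carrier (wreath G)" by (simp add: wreath_simps)
next
  fix x y z assume "x \<in> carrier (wreath G)" "y \<in> carrier (wreath G)" "z \<in> carrier (wreath G)"
  thus "x \<otimes>\<^bsub>wreath G\<^esub> y \<otimes>\<^bsub>wreath G\<^esub> z = x \<otimes>\<^bsub>wreath G\<^esub> (y \<otimes>\<^bsub>wreath G\<^esub> z)"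
    by (cases x, cases y, cases z) (auto simp: wreath_simps m_assoc add.assoc)
next
  fix x assume "x \<in> carrier (wreath G)"
  thus "\<one>\<^bsub>wreath G\<^esub> \<otimes>\<^bsub>wreath G\<^esub> x = x"
    by (cases x) (auto simp: wreath_simps)
next
  fix x assume x: "x \<in> carrier (wreath G)"
  obtain f k where xf: "x = (f, k)" by (cases x)
  let ?y = "(\<lambda>n. inv (f (n - k)), - k)"
  have "{n. inv (f (n - k)) \<noteq> \<one>} = (\<lambda>m. m + k) ` {m. f m \<noteq> \<one>}"
  proof (rule Set.set_eqI, rule iffI)
    fix n assume n: "n \<in> {n. inv (f (n - k)) \<noteq> \<one>}"
    hence "n - k \<in> {m. f m \<noteq> \<one>}" by auto
    hence "(n - k) + k \<in> (\<lambda>m. m + k) ` {m. f m \<noteq> \<one>}" by (rule imageI)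
    thus "n \<in> (\<lambda>m. m + k) ` {m. f m \<noteq> \<one>}" by simp
  next
    fix n assume "n \<in> (\<lambda>m. m + k) ` {m. f m \<noteq> \<one>}"
    then obtain m where m: "n = m + k" "f m \<noteq> \<one>" by auto
    have "f m \<in> carrier G" using x xf by (auto simp: wreath_simps)
    hence "inv (f m) \<noteq> \<one>" using m by (metis inv_inv inv_one)
    thus "n \<in> {n. inv (f (n - k)) \<noteq> \<one>}" using m by simp
  qed
  hence "?y \<in> carrier (wreath G)" using x xf by (auto simp: wreath_simps)
  moreover have "?y \<otimes>\<^bsub>wreath G\<^esub> x = \<one>\<^bsub>wreath G\<^esub>" using x xf by (auto simp: wreath_simps)
  ultimately show "\<exists>y\<in>carrier (wreath G). y \<otimes>\<^bsub>wreath G\<^esub> x = \<one>\<^bsub>wreath G\<^esub>" by blast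
qed

lemma wreath_inv:
  assumes "(f, k) \<in> carrier (wreath G)"
  shows "inv\<^bsub>wreath G\<^esub> (f, k) = (\<lambda>n. inv (f (n - k)), - k)"
proof (rule group.inv_equality[OF wreath_group])
  show "(f, k) \<in> carrier (wreath G)" by fact
  have "{n. inv (f (n - k)) \<noteq> \<one>} = (\<lambda>m. m + k) ` {m. f m \<noteq> \<one>}"
  proof (rule Set.set_eqI, rule iffI)
    fix n assume n: "n \<in> {n. inv (f (n - k)) \<noteq> \<one>}"
    hence "n - k \<in> {m. f m \<noteq> \<one>}" by auto
    hence "(n - k) + k \<in> (\<lambda>m. m + k) ` {m. f m \<noteq> \<one>}" by (rule imageI)
    thus "n \<in> (\<lambda>m. m + k) ` {m. f m \<noteq> \<one>}" by simp
  next
    fix n assume "n \<in> (\<lambda>m. m + k) ` {m. f m \<noteq> \<one>}"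
    then obtain m where m: "n = m + k" "f m \<noteq> \<one>" by auto
    have "f m \<in> carrier G" using assms by (auto simp: wreath_simps)
    hence "inv (f m) \<noteq> \<one>" using m by (metis inv_inv inv_one)
    thus "n \<in> {n. inv (f (n - k)) \<noteq> \<one>}" using m by simp
  qed
  thus "(\<lambda>n. inv (f (n - k)), - k) \<in> carrier (wreath G)" using assms by (auto simp: wreath_simps)
  show "(\<lambda>n. inv (f (n - k)), - k) \<otimes>\<^bsub>wreath G\<^esub> (f, k) = \<one>\<^bsub>wreath G\<^esub>" using assms by (auto simp: wreath_simps)
qed

lemma wr_t_carrier: "wr_t G \<in> carrier (wreath G)"
  by (simp add: wr_t_def wreath_simps)

lemma wr_t_nat_pow: "wr_t G [^]\<^bsub>wreath G\<^esub> (n::nat) = (\<lambda>_. \<one>, int n)"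
  by (induction n) (auto simp: wr_t_def wreath_simps)

lemma wr_t_pow: "wr_t G [^]\<^bsub>wreath G\<^esub> (i::int) = (\<lambda>_. \<one>, i)"
proof (cases "i < 0")
  case True
  have "wr_t G [^]\<^bsub>wreath G\<^esub> i = inv\<^bsub>wreath G\<^esub> (\<lambda>_. \<one>, int (nat (- i)))"
    using True by (simp add: int_pow_def2 wr_t_nat_pow)
  also have "\<dots> = (\<lambda>_. \<one>, i)" using True by (subst wreath_inv) (auto simp: wreath_simps)
  finally show ?thesis .
qed (simp add: int_pow_def2 wr_t_nat_pow)

lemma tpow_carrier: "(\<lambda>_. \<one>, i) \<in> carrier (wreath G)"
  by (simp add: wreath_simps)


lemma ten_nz_carrier:
  assumes J: "finite J" and nz: "ten G J c x \<noteq> 0"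
  shows "x \<in> carrier (wreath G)"
proof -
  obtain g k where x: "x = (g, k)" by (cases x)
  have "(\<forall>n. g n \<in> carrier G) \<and> (\<forall>n. n \<notin> J \<longrightarrow> g n = \<one>)" using nz x by (auto simp: ten_def split: if_splits)
  moreover hence "{n. g n \<noteq> \<one>} \<subseteq> J" by auto
  ultimately show ?thesis using x J by (auto simp: wreath_simps intro: finite_subset)
qed

lemma ten_supp:
  assumes J: "finite J" and c: "\<And>j. j \<in> J \<Longrightarrow> gr_elem G (c j)"
  shows "{x. ten G J c x \<noteq> 0} \<subseteq> (\<lambda>h. (wext G J h, 0)) ` PiE J (\<lambda>j. {u. c j u \<noteq> 0})"
proof
  fix x assume "x \<in> {x. ten G J c x \<noteq> 0}"
  then obtain g k where x: "x = (g, k)" and nz: "ten G J c (g, k) \<noteq> 0" by (cases x) auto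
  hence k: "k = 0" and off: "\<And>n. n \<notin> J \<Longrightarrow> g n = \<one>" and p: "(\<Prod>j\<in>J. c j (g j)) \<noteq> 0"
    by (auto simp: ten_def split: if_splits)
  have "restrict g J \<in> PiE J (\<lambda>j. {u. c j u \<noteq> 0})" using p J by (auto simp: prod_zero_iff)
  moreover have "wext G J (restrict g J) = g" using off by (auto simp: wext_def)
  ultimately show "x \<in> (\<lambda>h. (wext G J h, 0)) ` PiE J (\<lambda>j. {u. c j u \<noteq> 0})"
    using x k by (metis (no_types, lifting) image_eqI)
qed

lemma wext_carrier:
  assumes c: "\<And>j. j \<in> J \<Longrightarrow> gr_elem G (c j)" and J: "finite J" and h: "h \<in> PiE J (\<lambda>j. {u. c j u \<noteq> 0})"
  shows "(wext G J h, 0) \<in> carrier (wreath G)"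
proof -
  have "\<forall>n. wext G J h n \<in> carrier G" using h c gr_elemD(2) by (auto simp: wext_def PiE_def Pi_def)
  moreover have "{n. wext G J h n \<noteq> \<one>} \<subseteq> J" by (auto simp: wext_def split: if_splits)
  ultimately show ?thesis using J by (auto simp: wreath_simps intro: finite_subset)
qed

lemma gr_elem_ten:
  assumes J: "finite J" and c: "\<And>j. j \<in> J \<Longrightarrow> gr_elem G (c j)"
  shows "gr_elem (wreath G) (ten G J c)"
proof -
  have "finite (PiE J (\<lambda>j. {u. c j u \<noteq> 0}))" using J c gr_elemD(1) by (intro finite_PiE) auto
  moreover have "{x. ten G J c x \<noteq> 0} \<subseteq> (\<lambda>h. (wext G J h, 0)) ` PiE J (\<lambda>j. {u. c j u \<noteq> 0})"
    by (rule ten_supp[OF J]) (rule c)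
  ultimately have "finite {x. ten G J c x \<noteq> 0}" by (auto intro: finite_subset)
  moreover have "{x. ten G J c x \<noteq> 0} \<subseteq> carrier (wreath G)" using ten_nz_carrier[OF J] by auto
  ultimately show ?thesis by (simp add: gr_elem_def)
qed

lemma ten_ext:
  assumes K: "finite K" and JK: "J \<subseteq> K" and same: "\<And>j. j \<in> J \<Longrightarrow> c' j = c j"
    and one: "\<And>j. j \<in> K - J \<Longrightarrow> c' j = gr_one G"
  shows "ten G J c = ten G K c'"
proof (rule ext, clarify)
  fix g k
  have J: "finite J" using K JK by (auto intro: finite_subset)
  show "ten G J c (g, k) = ten G K c' (g, k)"
  proof (cases "k = 0 \<and> (\<forall>n. g n \<in> carrier G)")
    case False thus ?thesis by (auto simp: ten_def)
  next
    case True
    show ?thesis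
    proof (cases "\<forall>n. n \<notin> J \<longrightarrow> g n = \<one>")
      case True2: True
      have "(\<Prod>j\<in>K. c' j (g j)) = (\<Prod>j\<in>J. c' j (g j)) * (\<Prod>j\<in>K - J. c' j (g j))"
        using K JK by (metis mult.commute prod.subset_diff)
      also have "(\<Prod>j\<in>K - J. c' j (g j)) = 1"
        using True2 one by (intro prod.neutral) (auto simp: gr_one_def gr_of_def)
      finally show ?thesis using True True2 same JK by (auto simp: ten_def)
    next
      case False2: False
      then obtain n where n: "n \<notin> J" "g n \<noteq> \<one>" by auto
      show ?thesis
      proof (cases "n \<in> K")
        case True3: True
        have "(\<Prod>j\<in>K. c' j (g j)) = 0"
          using True3 n one K by (intro prod_zero bexI[of _ n]) (auto simp: gr_one_def gr_of_def)
        thus ?thesis using n by (auto simp: ten_def)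
      next
        case False
        thus ?thesis using n by (auto simp: ten_def)
      qed
    qed
  qed
qed

lemma ten_zero:
  assumes "finite J" "j \<in> J" "c j = gr_zero"
  shows "ten G J c = gr_zero"
  using assms by (auto simp: ten_def gr_zero_def fun_eq_iff prod_zero_iff)

lemma ten_star:
  assumes J: "finite J"
  shows "gr_star (wreath G) (ten G J c) = ten G J (\<lambda>j. gr_star G (c j))"
proof (rule ext, clarify)
  fix g k
  show "gr_star (wreath G) (ten G J c) (g, k) = ten G J (\<lambda>j. gr_star G (c j)) (g, k)"
  proof (cases "(g, k) \<in> carrier (wreath G)")
    case False
    hence "ten G J (\<lambda>j. gr_star G (c j)) (g, k) = 0" using ten_nz_carrier[OF J] by blast
    thus ?thesis using False by (simp add: gr_star_def)
  next
    case True
    hence gc: "\<And>n. g n \<in> carrier G" by (auto simp: wreath_simps)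
    have inv: "inv\<^bsub>wreath G\<^esub> (g, k) = (\<lambda>n. inv (g (n - k)), - k)" by (rule wreath_inv[OF True])
    have "(\<forall>n. n \<notin> J \<longrightarrow> inv (g n) = \<one>) \<longleftrightarrow> (\<forall>n. n \<notin> J \<longrightarrow> g n = \<one>)"
      using gc by (metis inv_inv inv_one)
    thus ?thesis using True gc by (auto simp: gr_star_def inv ten_def)
  qed
qed

lemma ten_tr: "gr_tr (wreath G) (ten G J c) = (\<Prod>j\<in>J. gr_tr G (c j))"
  by (simp add: gr_tr_def ten_def wreath_simps)

lemma gr_one_ten: "gr_one (wreath G) = ten G {} c"
  by (rule ext, clarify) (auto simp: gr_one_def gr_of_def ten_def wreath_simps fun_eq_iff)

lemma ten_single_diff: "gr_diff (ten G {i} (\<lambda>_. a)) (ten G {i} (\<lambda>_. b)) = ten G {i} (\<lambda>_. gr_diff a b)"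
  by (rule ext, clarify) (auto simp: gr_diff_def ten_def)

lemma gr_map_emb:
  assumes e: "gr_elem G e"
  shows "gr_map G (wreath G) (wr_emb G) e = ten G {0} (\<lambda>_. e)"
proof (rule ext, clarify)
  fix g k
  show "gr_map G (wreath G) (wr_emb G) e (g, k) = ten G {0} (\<lambda>_. e) (g, k)"
  proof (cases "(g, k) \<in> carrier (wreath G)")
    case False
    hence "ten G {0} (\<lambda>_. e) (g, k) = 0" using ten_nz_carrier[of "{0}"] by blast
    thus ?thesis using False by (simp add: gr_map_def)
  next
    case True
    hence gc: "\<And>n. g n \<in> carrier G" by (auto simp: wreath_simps)
    have "{x \<in> carrier G. e x \<noteq> 0 \<and> wr_emb G x = (g, k)} =
        (if k = 0 \<and> (\<forall>n. n \<noteq> 0 \<longrightarrow> g n = \<one>) \<and> e (g 0) \<noteq> 0 then {g 0} else {})"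
      using gc by (auto simp: wr_emb_def fun_eq_iff)
    thus ?thesis using True gc by (auto simp: gr_map_def ten_def)
  qed
qed


interpretation W: group "wreath G" by (rule wreath_group)

lemma wext_inj: "inj_on (\<lambda>h. (wext G J h, 0::int)) (PiE J B)"
proof (rule inj_onI)
  fix h1 h2 assume h: "h1 \<in> PiE J B" "h2 \<in> PiE J B" and eq: "(wext G J h1, 0::int) = (wext G J h2, 0)"
  show "h1 = h2"
  proof (rule ext)
    fix n
    have "wext G J h1 n = wext G J h2 n" using eq by simp
    thus "h1 n = h2 n"
      using h by (cases "n \<in> J") (auto simp: wext_def PiE_def extensional_def)
  qed
qed

lemma ten_mult:
  assumes J: "finite J" and c: "\<And>j. j \<in> J \<Longrightarrow> gr_elem G (c j)" and d: "\<And>j. j \<in> J \<Longrightarrow> gr_elem G (d j)"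
  shows "gr_mult (wreath G) (ten G J c) (ten G J d) = ten G J (\<lambda>j. gr_mult G (c j) (d j))"
proof (rule ext, clarify)
  fix g k
  let ?S = "\<lambda>j. {u. c j u \<noteq> 0}"
  let ?P = "PiE J ?S"
  let ?A = "(\<lambda>h. (wext G J h, 0::int)) ` ?P"
  have S: "\<And>j. j \<in> J \<Longrightarrow> finite (?S j)" "\<And>j. j \<in> J \<Longrightarrow> ?S j \<subseteq> carrier G" using c gr_elemD by auto
  have P: "finite ?P" using J S by (intro finite_PiE) auto
  have A: "finite ?A" "?A \<subseteq> carrier (wreath G)" using P wext_carrier[OF c J] by auto
  have sA: "{y \<in> carrier (wreath G). ten G J c y \<noteq> 0} \<subseteq> ?A" using ten_supp[OF J] c by blast
  show "gr_mult (wreath G) (ten G J c) (ten G J d) (g, k) = ten G J (\<lambda>j. gr_mult G (c j) (d j)) (g, k)"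
  proof (cases "(g, k) \<in> carrier (wreath G)")
    case False
    hence "ten G J (\<lambda>j. gr_mult G (c j) (d j)) (g, k) = 0" using ten_nz_carrier[OF J] by blast
    thus ?thesis using False by (simp add: gr_mult_def)
  next
    case True
    hence gc: "\<And>n. g n \<in> carrier G" by (auto simp: wreath_simps)
    let ?cond = "k = 0 \<and> (\<forall>n. n \<notin> J \<longrightarrow> g n = \<one>)"
    have "gr_mult (wreath G) (ten G J c) (ten G J d) (g, k) =
        (\<Sum>y\<in>?A. ten G J c y * ten G J d (inv\<^bsub>wreath G\<^esub> y \<otimes>\<^bsub>wreath G\<^esub> (g, k)))"
      using W.gr_mult_eq_sum[OF A sA] True by simp
    also have "\<dots> = (\<Sum>h\<in>?P. ten G J c (wext G J h, 0) * ten G J d (inv\<^bsub>wreath G\<^esub> (wext G J h, 0) \<otimes>\<^bsub>wreath G\<^esub> (g, k)))"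
      by (subst sum.reindex[OF wext_inj]) simp
    also have "\<dots> = (\<Sum>h\<in>?P. if ?cond then (\<Prod>j\<in>J. c j (h j) * d j (inv (h j) \<otimes> g j)) else 0)"
    proof (intro sum.cong refl)
      fix h assume h: "h \<in> ?P"
      have hc: "\<And>j. j \<in> J \<Longrightarrow> h j \<in> carrier G" using h S(2) by (auto simp: PiE_def Pi_def)
      have wc: "\<And>n. wext G J h n \<in> carrier G" using hc by (auto simp: wext_def)
      have wf: "(wext G J h, 0) \<in> carrier (wreath G)" using wext_carrier[OF c J h] .
      have iv: "inv\<^bsub>wreath G\<^esub> (wext G J h, 0) \<otimes>\<^bsub>wreath G\<^esub> (g, k) = (\<lambda>n. inv (wext G J h n) \<otimes> g n, k)"
        using wreath_inv[OF wf] by (simp add: wreath_simps)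
      have t1: "ten G J c (wext G J h, 0) = (\<Prod>j\<in>J. c j (h j))"
        using wc by (auto simp: ten_def wext_def intro!: prod.cong)
      have off: "(\<forall>n. n \<notin> J \<longrightarrow> inv (wext G J h n) \<otimes> g n = \<one>) \<longleftrightarrow> (\<forall>n. n \<notin> J \<longrightarrow> g n = \<one>)"
        using gc by (auto simp: wext_def)
      have t2: "ten G J d (\<lambda>n. inv (wext G J h n) \<otimes> g n, k) =
          (if ?cond then (\<Prod>j\<in>J. d j (inv (h j) \<otimes> g j)) else 0)"
      proof -
        have pe: "(\<Prod>j\<in>J. d j (inv (wext G J h j) \<otimes> g j)) = (\<Prod>j\<in>J. d j (inv (h j) \<otimes> g j))"
          by (rule prod.cong) (auto simp: wext_def)
        show ?thesis using off wc gc pe by (auto simp: ten_def)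
      qed
      show "ten G J c (wext G J h, 0) * ten G J d (inv\<^bsub>wreath G\<^esub> (wext G J h, 0) \<otimes>\<^bsub>wreath G\<^esub> (g, k)) =
          (if ?cond then (\<Prod>j\<in>J. c j (h j) * d j (inv (h j) \<otimes> g j)) else 0)"
        unfolding iv t1 t2 by (auto simp: prod.distrib)
    qed
    also have "\<dots> = (if ?cond then (\<Prod>j\<in>J. \<Sum>u\<in>?S j. c j u * d j (inv u \<otimes> g j)) else 0)"
    proof (cases ?cond)
      case True
      thus ?thesis using prod_sum_PiE[OF J, of ?S "\<lambda>j u. c j u * d j (inv u \<otimes> g j)"] S by simp
    next
      case False
      show ?thesis by (simp only: False if_False sum.neutral_const)
    qed
    also have "\<dots> = ten G J (\<lambda>j. gr_mult G (c j) (d j)) (g, k)"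
      using gc by (auto simp: ten_def gr_mult_elem[OF c] intro!: prod.cong)
    finally show ?thesis .
  qed
qed

lemma wr_tpow_eq: "wr_tpow G i = gr_of (wreath G) (\<lambda>_. \<one>, i)"
  by (simp add: wr_tpow_def wr_t_pow)

lemma gr_elem_tpow: "gr_elem (wreath G) (wr_tpow G i)"
  unfolding wr_tpow_eq by (rule W.gr_elem_of) (simp add: wreath_simps)

lemma tpow_mult: "gr_mult (wreath G) (wr_tpow G i) (wr_tpow G j) = wr_tpow G (i + j)"
  unfolding wr_tpow_eq by (subst W.gr_of_of) (auto simp: wreath_simps)

lemma tpow_inv: "inv\<^bsub>wreath G\<^esub> (\<lambda>_. \<one>, i) = (\<lambda>_. \<one>, - i)"
  by (subst wreath_inv) (auto simp: wreath_simps)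

lemma tpow_left: "gr_mult (wreath G) (wr_tpow G i) a =
    (\<lambda>x. if x \<in> carrier (wreath G) then a ((\<lambda>_. \<one>, - i) \<otimes>\<^bsub>wreath G\<^esub> x) else 0)"
  unfolding wr_tpow_eq by (subst W.gr_of_mult_left) (auto simp: wreath_simps tpow_inv)

lemma tpow_right: "gr_elem (wreath G) a \<Longrightarrow> gr_mult (wreath G) a (wr_tpow G i) =
    (\<lambda>x. if x \<in> carrier (wreath G) then a (x \<otimes>\<^bsub>wreath G\<^esub> (\<lambda>_. \<one>, - i)) else 0)"
  unfolding wr_tpow_eq by (subst W.gr_of_mult_right) (auto simp: wreath_simps tpow_inv)

lemma ten_conj:
  assumes J: "finite J" and c: "\<And>j. j \<in> J \<Longrightarrow> gr_elem G (c j)"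
  shows "gr_mult (wreath G) (gr_mult (wreath G) (wr_tpow G (- k)) (ten G J c)) (wr_tpow G k)
     = ten G ((\<lambda>j. j + k) ` J) (\<lambda>j. c (j - k))"
proof -
  have el: "gr_elem (wreath G) (gr_mult (wreath G) (wr_tpow G (- k)) (ten G J c))"
    by (intro W.gr_elem_mult gr_elem_tpow gr_elem_ten J c)
  show ?thesis
  proof (rule ext, clarify)
    fix g l
    show "gr_mult (wreath G) (gr_mult (wreath G) (wr_tpow G (- k)) (ten G J c)) (wr_tpow G k) (g, l)
     = ten G ((\<lambda>j. j + k) ` J) (\<lambda>j. c (j - k)) (g, l)"
    proof (cases "(g, l) \<in> carrier (wreath G)")
      case False
      hence "ten G ((\<lambda>j. j + k) ` J) (\<lambda>j. c (j - k)) (g, l) = 0" using ten_nz_carrier[of "(\<lambda>j. j + k) ` J"] J by blast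
      thus ?thesis using False by (simp add: tpow_right[OF el])
    next
      case True
      hence gc: "\<And>n. g n \<in> carrier G" by (auto simp: wreath_simps)
      have m1: "(g, l) \<otimes>\<^bsub>wreath G\<^esub> (\<lambda>_. \<one>, - k) = (g, l - k)" using gc by (simp add: wreath_simps)
      have m1c: "(g, l - k) \<in> carrier (wreath G)" using True by (simp add: wreath_simps)
      have m2: "(\<lambda>_. \<one>, k) \<otimes>\<^bsub>wreath G\<^esub> (g, l - k) = (\<lambda>n. g (n + k), l)" using gc by (simp add: wreath_simps)
      have lhs: "gr_mult (wreath G) (gr_mult (wreath G) (wr_tpow G (- k)) (ten G J c)) (wr_tpow G k) (g, l)
          = ten G J c (\<lambda>n. g (n + k), l)"
        unfolding tpow_right[OF el] using True m1c by (simp add: tpow_left m1 m2)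
      have off: "(\<forall>n. n \<notin> J \<longrightarrow> g (n + k) = \<one>) \<longleftrightarrow> (\<forall>n. n \<notin> (\<lambda>j. j + k) ` J \<longrightarrow> g n = \<one>)"
      proof
        assume a: "\<forall>n. n \<notin> J \<longrightarrow> g (n + k) = \<one>"
        show "\<forall>n. n \<notin> (\<lambda>j. j + k) ` J \<longrightarrow> g n = \<one>"
        proof (intro allI impI)
          fix n assume "n \<notin> (\<lambda>j. j + k) ` J"
          hence "n - k \<notin> J" by (metis diff_add_cancel image_eqI)
          thus "g n = \<one>" using a by (metis diff_add_cancel)
        qed
      next
        assume b: "\<forall>n. n \<notin> (\<lambda>j. j + k) ` J \<longrightarrow> g n = \<one>"
        show "\<forall>n. n \<notin> J \<longrightarrow> g (n + k) = \<one>"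
        proof (intro allI impI)
          fix n assume "n \<notin> J"
          hence "n + k \<notin> (\<lambda>j. j + k) ` J" by auto
          thus "g (n + k) = \<one>" using b by blast
        qed
      qed
      have pr: "(\<Prod>j\<in>(\<lambda>j. j + k) ` J. c (j - k) (g j)) = (\<Prod>j\<in>J. c j (g (j + k)))"
        by (subst prod.reindex) (auto intro: inj_onI)
      show ?thesis unfolding lhs using gc off pr by (auto simp: ten_def)
    qed
  qed
qed

end

context group begin

lemma ten_cong: "(\<And>j. j \<in> J \<Longrightarrow> c j = c' j) \<Longrightarrow> ten G J c = ten G J c'"
  unfolding ten_def by (rule ext, clarify) (auto intro!: prod.cong)

lemma ten_mult_gen:
  assumes J: "finite J" and K: "finite K" and c: "\<And>j. j \<in> J \<Longrightarrow> gr_elem G (c j)" and d: "\<And>j. j \<in> K \<Longrightarrow> gr_elem G (d j)"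
  shows "gr_mult (wreath G) (ten G J c) (ten G K d) =
    ten G (J \<union> K) (\<lambda>l. gr_mult G (if l \<in> J then c l else gr_one G) (if l \<in> K then d l else gr_one G))"
proof -
  have "ten G J c = ten G (J \<union> K) (\<lambda>l. if l \<in> J then c l else gr_one G)"
    by (rule ten_ext) (use J K in auto)
  moreover have "ten G K d = ten G (J \<union> K) (\<lambda>l. if l \<in> K then d l else gr_one G)"
    by (rule ten_ext) (use J K in auto)
  ultimately show ?thesis
    by (simp only:) (rule ten_mult, use J K c d gr_elem_one in auto)
qed

end

locale wrp = group G for G :: "('u, 'z) monoid_scheme" +
  fixes e :: "'u \<Rightarrow> complex"
  assumes proj: "gr_projection G e"
begin

interpretation W: group "wreath G" by (rule wreath_group)

definition fe where "fe = gr_diff (gr_one G) e"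
definition Q :: "nat \<Rightarrow> int \<Rightarrow> 'u \<Rightarrow> complex" where "Q n j = (if j = 1 \<or> j = int n then fe else e)"

lemma e_elem: "gr_elem G e" and e_star: "gr_star G e = e" and ee: "gr_mult G e e = e"
  using proj by (auto simp: gr_projection_def)

lemma fe_elem: "gr_elem G fe" unfolding fe_def by (intro gr_elem_diff gr_elem_one e_elem)

lemma fe_star: "gr_star G fe = fe" unfolding fe_def by (simp add: gr_star_diff gr_star_one e_star)

lemma diff_self: "gr_diff a a = gr_zero" by (simp add: gr_diff_def gr_zero_def)

lemma efe: "gr_mult G e fe = gr_zero"
  unfolding fe_def by (simp add: gr_mult_diff_right e_elem gr_mult_one ee diff_self)

lemma fee: "gr_mult G fe e = gr_zero"
  unfolding fe_def by (simp add: gr_mult_diff_left e_elem gr_elem_one gr_one_mult ee diff_self)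

lemma fefe: "gr_mult G fe fe = fe"
proof -
  have "gr_mult G fe fe = gr_diff (gr_mult G (gr_one G) fe) (gr_mult G e fe)"
    by (subst (1) fe_def, rule gr_mult_diff_left[OF gr_elem_one e_elem])
  thus ?thesis by (simp add: efe gr_one_mult fe_elem gr_diff_def gr_zero_def)
qed

lemma Q_elem: "gr_elem G (Q n j)" by (simp add: Q_def e_elem fe_elem)

lemma wr_e_ten: "wr_e G e i = ten G {i} (\<lambda>_. e)"
proof -
  have "wr_e G e i = ten G ((\<lambda>j. j + i) ` {0}) (\<lambda>j. (\<lambda>_. e) (j - i))"
    unfolding wr_e_def gr_map_emb[OF e_elem] by (rule ten_conj) (auto simp: e_elem)
  thus ?thesis by simp
qed

lemma wr_f_ten: "wr_f G e i = ten G {i} (\<lambda>_. fe)"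
proof -
  have "gr_one (wreath G) = ten G {i} (\<lambda>_. gr_one G)"
    unfolding gr_one_ten[of "\<lambda>_. gr_one G"] by (rule ten_ext) auto
  thus ?thesis unfolding wr_f_def wr_e_ten fe_def by (simp add: ten_single_diff)
qed


lemma gr_prod_ten:
  assumes "distinct xs" "\<And>i. i \<in> set xs \<Longrightarrow> gr_elem G (C i)"
  shows "gr_prod (wreath G) (map (\<lambda>i. ten G {i} (\<lambda>_. C i)) xs) = ten G (set xs) C"
  using assms
proof (induction xs)
  case Nil
  thus ?case by (simp add: gr_prod_def gr_one_ten)
next
  case (Cons i xs)
  have "gr_prod (wreath G) (map (\<lambda>i. ten G {i} (\<lambda>_. C i)) (i # xs)) =
      gr_mult (wreath G) (ten G {i} (\<lambda>_. C i)) (ten G (set xs) C)"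
    using Cons by (simp add: gr_prod_def)
  also have "\<dots> = ten G ({i} \<union> set xs) (\<lambda>l. gr_mult G (if l \<in> {i} then C i else gr_one G) (if l \<in> set xs then C l else gr_one G))"
    by (rule ten_mult_gen) (use Cons.prems in auto)
  also have "\<dots> = ten G (set (i # xs)) C"
    by (simp, rule ten_cong) (use Cons.prems in \<open>auto simp: gr_mult_one gr_one_mult\<close>)
  finally show ?case .
qed

lemma q_ten:
  assumes n: "n \<ge> 2"
  shows "wr_q G e n = ten G {1..int n} (Q n)"
proof -
  have ul: "[1..<Suc n] = 1 # [2..<n] @ [n]" using n by (simp add: upt_conv_Cons upt_Suc_append numeral_2_eq_2)
  have "[wr_f G e 1] @ map (\<lambda>i. wr_e G e (int i)) [2..<n] @ [wr_f G e (int n)] =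
      map (\<lambda>i. ten G {i} (\<lambda>_. Q n i)) (map int [1..<Suc n])"
    unfolding ul using n by (auto simp: wr_e_ten wr_f_ten Q_def)
  moreover have "set (map int [1..<Suc n]) = {1..int n}"
  proof (rule Set.set_eqI)
    fix x :: int
    show "x \<in> set (map int [1..<Suc n]) \<longleftrightarrow> x \<in> {1..int n}"
    proof
      assume "x \<in> {1..int n}"
      hence "nat x \<in> {1..<Suc n}" "x = int (nat x)" by auto
      thus "x \<in> set (map int [1..<Suc n])" by (metis image_eqI list.set_map set_upt)
    qed auto
  qed
  moreover have "gr_prod (wreath G) (map (\<lambda>i. ten G {i} (\<lambda>_. Q n i)) (map int [1..<Suc n])) = ten G (set (map int [1..<Suc n])) (Q n)"
    by (rule gr_prod_ten) (auto simp: distinct_map inj_on_def Q_elem)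
  ultimately show ?thesis unfolding wr_q_def by simp
qed


abbreviation M where "M \<equiv> gr_mult (wreath G)"
abbreviation tp where "tp \<equiv> wr_tpow G"
abbreviation q where "q n \<equiv> wr_q G e n"

lemma q_elem: "n \<ge> 2 \<Longrightarrow> gr_elem (wreath G) (q n)"
  by (simp add: q_ten gr_elem_ten Q_elem)

lemma q_star: "n \<ge> 2 \<Longrightarrow> gr_star (wreath G) (q n) = q n"
  by (simp add: q_ten ten_star, rule ten_cong) (simp add: Q_def e_star fe_star)

lemma q_idem: "n \<ge> 2 \<Longrightarrow> M (q n) (q n) = q n"
  by (simp add: q_ten ten_mult Q_elem, rule ten_cong) (simp add: Q_def ee fefe)

lemma tp0: "tp 0 = gr_one (wreath G)"
  by (simp add: wr_tpow_eq gr_one_def wreath_simps)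

lemma tp_cancel: "gr_elem (wreath G) a \<Longrightarrow> M (tp i) (M (tp (- i)) a) = a"
  by (simp add: W.gr_mult_assoc[symmetric] gr_elem_tpow tpow_mult tp0 W.gr_one_mult)

lemma q_tr:
  assumes n: "n \<ge> 2"
  shows "gr_tr (wreath G) (q n) = (gr_tr G fe)\<^sup>2 * (gr_tr G e) ^ (n - 2)"
proof -
  have split: "{1..int n} = {1, int n} \<union> {2..int n - 1}" using n by auto
  have "gr_tr (wreath G) (q n) = (\<Prod>j\<in>{1..int n}. gr_tr G (Q n j))" by (simp add: q_ten n ten_tr)
  also have "\<dots> = (\<Prod>j\<in>{1, int n}. gr_tr G (Q n j)) * (\<Prod>j\<in>{2..int n - 1}. gr_tr G (Q n j))"
    unfolding split by (rule prod.union_disjoint) auto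
  also have "(\<Prod>j\<in>{1, int n}. gr_tr G (Q n j)) = (gr_tr G fe)\<^sup>2" using n by (simp add: Q_def power2_eq_square)
  also have "(\<Prod>j\<in>{2..int n - 1}. gr_tr G (Q n j)) = (\<Prod>j\<in>{2..int n - 1}. gr_tr G e)"
    by (rule prod.cong) (auto simp: Q_def)
  also have "\<dots> = (gr_tr G e) ^ (n - 2)"
  proof -
    have "nat (int n - 2) = n - 2" using n by simp
    thus ?thesis by simp
  qed
  finally show ?thesis .
qed

lemma e_q:
  assumes n: "n \<ge> 2" and j: "1 \<le> j" "j \<le> int n"
  shows "M (wr_e G e j) (q n) = (if 2 \<le> j \<and> j \<le> int n - 1 then q n else gr_zero)"
proof -
  have "M (wr_e G e j) (q n) = ten G ({j} \<union> {1..int n})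
     (\<lambda>l. gr_mult G (if l \<in> {j} then e else gr_one G) (if l \<in> {1..int n} then Q n l else gr_one G))"
    unfolding wr_e_ten q_ten[OF n] by (rule ten_mult_gen) (auto simp: e_elem Q_elem)
  also have "{j} \<union> {1..int n} = {1..int n}" using j by auto
  finally have eq: "M (wr_e G e j) (q n) = ten G {1..int n}
     (\<lambda>l. gr_mult G (if l \<in> {j} then e else gr_one G) (if l \<in> {1..int n} then Q n l else gr_one G))" .
  show ?thesis
  proof (cases "2 \<le> j \<and> j \<le> int n - 1")
    case True
    thus ?thesis unfolding eq
      by (simp add: q_ten[OF n], intro ten_cong) (auto simp: Q_def ee gr_one_mult e_elem fe_elem)
  next
    case False
    hence "j = 1 \<or> j = int n" using j by auto
    hence "gr_mult G (if j \<in> {j} then e else gr_one G) (if j \<in> {1..int n} then Q n j else gr_one G) = gr_zero"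
      using j by (auto simp: Q_def efe)
    hence "ten G {1..int n}
     (\<lambda>l. gr_mult G (if l \<in> {j} then e else gr_one G) (if l \<in> {1..int n} then Q n l else gr_one G)) = gr_zero"
      by (intro ten_zero[of _ j]) (use j in auto)
    hence "M (wr_e G e j) (q n) = gr_zero" using eq by simp
    moreover have "(if 2 \<le> j \<and> j \<le> int n - 1 then q n else gr_zero) = gr_zero" using False by (rule if_not_P)
    ultimately show ?thesis by simp
  qed
qed

lemma qtq:
  assumes n: "n \<ge> 2" and n': "n' \<ge> 2" and k: "2 - int n \<le> k" "k \<le> int n' - 2"
  shows "M (M (q n) (tp k)) (q n') = (if k = 0 \<and> n = n' then q n else gr_zero)"
proof -
  let ?J = "(\<lambda>j. j + k) ` {1..int n}"
  let ?X = "ten G ?J (\<lambda>j. Q n (j - k))"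
  have X: "M (M (tp (- k)) (q n)) (tp k) = ?X"
    unfolding q_ten[OF n] by (rule ten_conj) (auto simp: Q_elem)
  have Xe: "gr_elem (wreath G) ?X" by (rule gr_elem_ten) (auto simp: Q_elem)
  have "M (q n) (tp k) = M (tp k) (M (M (tp (- k)) (q n)) (tp k))"
    by (simp add: W.gr_mult_assoc gr_elem_tpow q_elem n W.gr_elem_mult tp_cancel)
  hence "M (q n) (tp k) = M (tp k) ?X" by (simp only: X)
  hence "M (M (q n) (tp k)) (q n') = M (M (tp k) ?X) (q n')" by (simp only:)
  also have "\<dots> = M (tp k) (M ?X (q n'))" by (rule W.gr_mult_assoc[OF gr_elem_tpow Xe q_elem[OF n']])
  finally have "M (M (q n) (tp k)) (q n') = M (tp k) (M ?X (q n'))" .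
  also have "M ?X (q n') = ten G (?J \<union> {1..int n'})
     (\<lambda>l. gr_mult G (if l \<in> ?J then Q n (l - k) else gr_one G) (if l \<in> {1..int n'} then Q n' l else gr_one G))"
    unfolding q_ten[OF n'] by (rule ten_mult_gen) (auto simp: Q_elem)
  finally have eq: "M (M (q n) (tp k)) (q n') = M (tp k) (ten G (?J \<union> {1..int n'})
     (\<lambda>l. gr_mult G (if l \<in> ?J then Q n (l - k) else gr_one G) (if l \<in> {1..int n'} then Q n' l else gr_one G)))" .
  show ?thesis
  proof (cases "k = 0 \<and> n = n'")
    case True
    have "?X = q n" using True by (simp add: q_ten n n')
    hence "M ?X (q n') = q n" using True q_idem n by simp
    hence "M (M (q n) (tp k)) (q n') = M (tp 0) (q n)"
      using \<open>M (M (q n) (tp k)) (q n') = M (tp k) (M ?X (q n'))\<close> True by simp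
    thus ?thesis using True by (simp add: tp0 W.gr_one_mult q_elem n n')
  next
    case False
    have "\<exists>l\<in>?J \<union> {1..int n'}. gr_mult G (if l \<in> ?J then Q n (l - k) else gr_one G)
        (if l \<in> {1..int n'} then Q n' l else gr_one G) = gr_zero"
    proof (cases "k < 0")
      case True
      have "1 \<in> ?J" using True k by (auto simp: image_iff intro!: bexI[of _ "1 - k"])
      moreover have "Q n (1 - k) = e" using True k by (auto simp: Q_def)
      moreover have "Q n' 1 = fe" by (simp add: Q_def)
      ultimately show ?thesis using n' by (intro bexI[of _ 1]) (auto simp: efe)
    next
      case False2: False
      show ?thesis
      proof (cases "k > 0")
        case True
        have "1 + k \<in> ?J" using True k n by (auto simp: image_iff)
        moreover have "Q n (1 + k - k) = fe" by (simp add: Q_def)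
        moreover have "Q n' (1 + k) = e" using True k by (auto simp: Q_def)
        moreover have "1 + k \<in> {1..int n'}" using True k by auto
        ultimately show ?thesis by (intro bexI[of _ "1 + k"]) (auto simp: fee)
      next
        case False3: False
        hence k0: "k = 0" using False2 by simp
        hence nn: "n \<noteq> n'" using False by simp
        show ?thesis
        proof (cases "n < n'")
          case True
          have "int n \<in> ?J" using k0 n by auto
          moreover have "Q n (int n - k) = fe" using k0 by (simp add: Q_def)
          moreover have "Q n' (int n) = e" using True n by (auto simp: Q_def)
          moreover have "int n \<in> {1..int n'}" using True n by auto
          ultimately show ?thesis by (intro bexI[of _ "int n"]) (auto simp: fee)
        next
          case False4: False
          hence lt: "n' < n" using nn by simp
          have "int n' \<in> ?J" using k0 n' lt by auto
          moreover have "Q n (int n' - k) = e" using k0 lt n' by (auto simp: Q_def)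
          moreover have "Q n' (int n') = fe" by (simp add: Q_def)
          moreover have "int n' \<in> {1..int n'}" using n' by auto
          ultimately show ?thesis by (intro bexI[of _ "int n'"]) (auto simp: efe)
        qed
      qed
    qed
    then obtain l where l: "l \<in> ?J \<union> {1..int n'}" and z: "gr_mult G (if l \<in> ?J then Q n (l - k) else gr_one G)
        (if l \<in> {1..int n'} then Q n' l else gr_one G) = gr_zero" by blast
    have "ten G (?J \<union> {1..int n'})
     (\<lambda>l. gr_mult G (if l \<in> ?J then Q n (l - k) else gr_one G) (if l \<in> {1..int n'} then Q n' l else gr_one G)) = gr_zero"
      by (rule ten_zero[OF _ l]) (use z in auto)
    hence "M (M (q n) (tp k)) (q n') = gr_zero" unfolding eq by (simp add: W.gr_mult_zero)
    moreover have "(if k = 0 \<and> n = n' then q n else gr_zero) = gr_zero" using False by (rule if_not_P)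
    ultimately show ?thesis by simp
  qed
qed

end

lemma sum_shift1: "n \<ge> 1 \<Longrightarrow> (\<Sum>i\<in>{1..n-1}. f i) = (\<Sum>k<n-1. f (Suc k))"
proof -
  assume n: "n \<ge> 1"
  have "{1..n-1} = Suc ` {..<n-1}"
  proof (rule Set.set_eqI)
    fix x show "x \<in> {1..n-1} \<longleftrightarrow> x \<in> Suc ` {..<n-1}"
    proof
      assume "x \<in> {1..n-1}" hence "x = Suc (x - 1)" "x - 1 < n - 1" by auto
      thus "x \<in> Suc ` {..<n-1}" by blast
    qed auto
  qed
  thus ?thesis by (simp add: sum.reindex)
qed

lemma diagD:
  assumes "diagonalizes B" "n \<ge> 2" "i \<in> {1..n-1}" "j \<in> {1..n-1}"
  shows "(\<Sum>k\<in>{1..n-1}. B n i k * B n j k) = (if i = j then 1 else 0)"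
    "(\<Sum>k\<in>{1..n-1}. \<Sum>l\<in>{1..n-1}. B n i k * alphaA k l * B n j l) = (if i = j then lam i n else 0)"
  using assms unfolding diagonalizes_def by (meson)+

lemma eig:
  assumes B: "diagonalizes B" and n: "n \<ge> 2" and m: "m \<in> {1..n-1}" and j: "j \<in> {1..n-1}"
  shows "(\<Sum>i\<in>{1..n-1}. B n m i * alphaA i j) = lam m n * B n m j"
proof -
  define N where "N = n - 1"
  define Bm where "Bm = mat N N (\<lambda>(i,j). B n (Suc i) (Suc j))"
  define Am where "Am = mat N N (\<lambda>(i,j). alphaA (Suc i) (Suc j))"
  define Dm where "Dm = mat N N (\<lambda>(i,j). if i = j then lam (Suc i) n else 0)"
  have Bc: "Bm \<in> carrier_mat N N" and Ac: "Am \<in> carrier_mat N N" and Dc: "Dm \<in> carrier_mat N N"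
    by (simp_all add: Bm_def Am_def Dm_def)
  have n1: "n \<ge> 1" using n by simp
  have orth: "Bm * transpose_mat Bm = 1\<^sub>m N"
  proof (rule eq_matI)
    fix i k assume ik: "i < dim_row (1\<^sub>m N)" "k < dim_col (1\<^sub>m N)"
    have mem: "Suc i \<in> {1..n-1}" "Suc k \<in> {1..n-1}" using ik by (auto simp: N_def)
    have "(\<Sum>l\<in>{1..n-1}. B n (Suc i) l * B n (Suc k) l) = (if Suc i = Suc k then 1 else 0)"
      by (rule diagD(1)[OF B n mem])
    moreover have "(\<Sum>l\<in>{1..n-1}. B n (Suc i) l * B n (Suc k) l) = (\<Sum>l<N. B n (Suc i) (Suc l) * B n (Suc k) (Suc l))"
      unfolding N_def by (rule sum_shift1[OF n1])
    ultimately have "(\<Sum>l<N. B n (Suc i) (Suc l) * B n (Suc k) (Suc l)) = (if i = k then 1 else 0)" by simp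
    thus "(Bm * transpose_mat Bm) $$ (i, k) = 1\<^sub>m N $$ (i, k)"
      using ik by (simp add: Bm_def scalar_prod_def atLeast0LessThan)
  qed (simp_all add: Bm_def)
  have diag: "Bm * Am * transpose_mat Bm = Dm"
  proof (rule eq_matI)
    fix i k assume ik: "i < dim_row Dm" "k < dim_col Dm"
    have mem: "Suc i \<in> {1..n-1}" "Suc k \<in> {1..n-1}" using ik by (auto simp: N_def Dm_def)
    have "(\<Sum>l\<in>{1..n-1}. \<Sum>l'\<in>{1..n-1}. B n (Suc i) l * alphaA l l' * B n (Suc k) l') = (if Suc i = Suc k then lam (Suc i) n else 0)"
      by (rule diagD(2)[OF B n mem])
    hence "(\<Sum>l'\<in>{1..n-1}. (\<Sum>l\<in>{1..n-1}. B n (Suc i) l * alphaA l l') * B n (Suc k) l') = (if Suc i = Suc k then lam (Suc i) n else 0)"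
    proof -
      assume h: "(\<Sum>l\<in>{1..n-1}. \<Sum>l'\<in>{1..n-1}. B n (Suc i) l * alphaA l l' * B n (Suc k) l') = (if Suc i = Suc k then lam (Suc i) n else 0)"
      have "(\<Sum>l'\<in>{1..n-1}. (\<Sum>l\<in>{1..n-1}. B n (Suc i) l * alphaA l l') * B n (Suc k) l') =
          (\<Sum>l'\<in>{1..n-1}. \<Sum>l\<in>{1..n-1}. B n (Suc i) l * alphaA l l' * B n (Suc k) l')"
        by (simp add: sum_distrib_right)
      also have "\<dots> = (\<Sum>l\<in>{1..n-1}. \<Sum>l'\<in>{1..n-1}. B n (Suc i) l * alphaA l l' * B n (Suc k) l')"
        by (rule sum.swap)
      finally show ?thesis using h by simp
    qed
    moreover have "(\<Sum>l'\<in>{1..n-1}. (\<Sum>l\<in>{1..n-1}. B n (Suc i) l * alphaA l l') * B n (Suc k) l') =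
       (\<Sum>l'<N. (\<Sum>l<N. B n (Suc i) (Suc l) * alphaA (Suc l) (Suc l')) * B n (Suc k) (Suc l'))"
      unfolding N_def by (simp only: sum_shift1[OF n1])
    ultimately have "(\<Sum>l'<N. (\<Sum>l<N. B n (Suc i) (Suc l) * alphaA (Suc l) (Suc l')) * B n (Suc k) (Suc l')) = (if i = k then lam (Suc i) n else 0)"
      by simp
    moreover have "(Bm * Am * transpose_mat Bm) $$ (i, k) = (\<Sum>l'<N. (Bm * Am) $$ (i, l') * Bm $$ (k, l'))"
      using ik Bc Ac apply (simp add: Dm_def scalar_prod_def atLeast0LessThan)
      apply (simp add: sum_distrib_left sum_distrib_right mult.assoc)
      by (rule sum.swap)
    moreover have "\<And>l'. l' < N \<Longrightarrow> (Bm * Am) $$ (i, l') = (\<Sum>l<N. B n (Suc i) (Suc l) * alphaA (Suc l) (Suc l'))"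
      using ik Bc Ac by (simp add: Dm_def Bm_def Am_def scalar_prod_def atLeast0LessThan)
    moreover have "Bm $$ (k, l') = B n (Suc k) (Suc l')" if "l' < N" for l'
      using ik that by (simp add: Dm_def Bm_def)
    ultimately show "(Bm * Am * transpose_mat Bm) $$ (i, k) = Dm $$ (i, k)"
      using ik by (simp add: Dm_def)
  qed (simp_all add: Bm_def Dm_def)
  have orth2: "transpose_mat Bm * Bm = 1\<^sub>m N"
    by (rule mat_mult_left_right_inverse[OF Bc _ orth]) (simp add: Bc)
  have BAc: "Bm * Am \<in> carrier_mat N N" using Bc Ac by simp
  have "Bm * Am = Bm * Am * (transpose_mat Bm * Bm)" unfolding orth2 by (rule right_mult_one_mat[OF BAc, symmetric])
  also have "\<dots> = (Bm * Am * transpose_mat Bm) * Bm"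
    by (rule assoc_mult_mat[symmetric, OF BAc _ Bc]) (use Bc in simp)
  also have "\<dots> = Dm * Bm" by (simp add: diag)
  finally have eq: "Bm * Am = Dm * Bm" .
  obtain m0 where m0: "m = Suc m0" using m by (cases m) auto
  obtain j0 where j0: "j = Suc j0" using j by (cases j) auto
  note mj = m0 j0
  have mi: "m0 < N" "j0 < N" using m j mj by (auto simp: N_def)
  have "(Bm * Am) $$ (m0, j0) = (\<Sum>k<N. B n m (Suc k) * alphaA (Suc k) j)"
    using mi mj by (simp add: Bm_def Am_def scalar_prod_def atLeast0LessThan)
  also have "\<dots> = (\<Sum>i\<in>{1..n-1}. B n m i * alphaA i j)"
    unfolding N_def by (rule sum_shift1[OF n1, symmetric])
  finally have l: "(Bm * Am) $$ (m0, j0) = (\<Sum>i\<in>{1..n-1}. B n m i * alphaA i j)" .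
  have "(Dm * Bm) $$ (m0, j0) = (\<Sum>k<N. (if m0 = k then lam (Suc m0) n else 0) * B n (Suc k) (Suc j0))"
    using mi by (simp add: Bm_def Dm_def scalar_prod_def atLeast0LessThan)
  also have "\<dots> = (\<Sum>k<N. (if k = m0 then lam (Suc m0) n * B n (Suc k) (Suc j0) else 0))"
    by (rule sum.cong) auto
  also have "\<dots> = lam m n * B n m j" using mi mj by simp
  finally have r: "(Dm * Bm) $$ (m0, j0) = lam m n * B n m j" .
  show ?thesis using eq l r by simp
qed


lemma series_aux:
  fixes z :: complex
  assumes z: "norm z < 1"
  shows "(\<lambda>n. if n \<ge> 2 then of_nat (n - 1) * (1 - z)\<^sup>2 * z ^ (n - 2) else 0) sums 1"
proof -
  let ?f = "\<lambda>n::nat. if n \<ge> 2 then of_nat (n - 1) * (1 - z)\<^sup>2 * z ^ (n - 2) else (0::complex)"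
  have sn: "summable (\<lambda>k. norm (z ^ k))"
    using z by (simp add: norm_power summable_geometric)
  have "(\<lambda>k. \<Sum>i\<le>k. z ^ i * z ^ (k - i)) sums ((\<Sum>k. z ^ k) * (\<Sum>k. z ^ k))"
    by (rule Cauchy_product_sums[OF sn sn])
  moreover have "\<And>k. (\<Sum>i\<le>k. z ^ i * z ^ (k - i)) = of_nat (Suc k) * z ^ k"
    by (simp add: power_add[symmetric])
  moreover have "(\<Sum>k. z ^ k) = 1 / (1 - z)" using suminf_geometric[OF z] .
  ultimately have s1: "(\<lambda>k. of_nat (Suc k) * z ^ k) sums (1 / (1 - z) * (1 / (1 - z)))" by simp
  have z1: "1 - z \<noteq> 0" using z by auto
  have "(\<lambda>k. (1 - z)\<^sup>2 * (of_nat (Suc k) * z ^ k)) sums ((1 - z)\<^sup>2 * (1 / (1 - z) * (1 / (1 - z))))"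
    by (rule sums_mult[OF s1])
  moreover have "(1 - z)\<^sup>2 * (1 / (1 - z) * (1 / (1 - z))) = 1" 
  proof -
    have "(1 - z)\<^sup>2 * (1 / (1 - z) * (1 / (1 - z))) = ((1 - z) * (1 / (1 - z))) * ((1 - z) * (1 / (1 - z)))"
      by (simp add: power2_eq_square mult_ac)
    also have "(1 - z) * (1 / (1 - z)) = 1" using z1 by simp
    finally show ?thesis by simp
  qed
  ultimately have "(\<lambda>k. ?f (Suc (Suc k))) sums 1" by (simp add: mult_ac)
  hence "(\<lambda>k. ?f (Suc k)) sums 1" using sums_Suc_iff[of "\<lambda>k. ?f (Suc k)"] by simp
  thus ?thesis using sums_Suc_iff[of ?f] by simp
qed


context wrp begin

interpretation W: group "wreath G" by (rule wreath_group)

definition X :: "nat \<Rightarrow> nat \<Rightarrow> ((int \<Rightarrow> 'u) \<times> int \<Rightarrow> complex)" where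
  "X n i = M (tp (int i)) (q n)"

lemma X_elem: "n \<ge> 2 \<Longrightarrow> gr_elem (wreath G) (X n i)"
  unfolding X_def by (intro W.gr_elem_mult gr_elem_tpow q_elem)

lemma r_eq: "wr_r G e B m n = (\<lambda>x. \<Sum>i\<in>{1..n-1}. complex_of_real (B n m i) * X n i x)"
  by (simp add: wr_r_def X_def)

lemma r_elem: "n \<ge> 2 \<Longrightarrow> gr_elem (wreath G) (wr_r G e B m n)"
  unfolding r_eq by (intro W.gr_elem_sum X_elem) auto

lemma star_tp: "gr_star (wreath G) (tp i) = tp (- i)"
  by (simp add: wr_tpow_eq W.gr_star_of wreath_simps tpow_inv)

lemma Y_elem: "n \<ge> 2 \<Longrightarrow> gr_elem (wreath G) (M (q n) (tp i))"
  by (intro W.gr_elem_mult gr_elem_tpow q_elem)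

lemma star_X: "n \<ge> 2 \<Longrightarrow> gr_star (wreath G) (X n i) = M (q n) (tp (- int i))"
  unfolding X_def by (simp add: W.gr_star_mult gr_elem_tpow q_elem q_star star_tp)

lemma star_r: "n \<ge> 2 \<Longrightarrow> gr_star (wreath G) (wr_r G e B m n) =
    (\<lambda>x. \<Sum>i\<in>{1..n-1}. complex_of_real (B n m i) * M (q n) (tp (- int i)) x)"
  unfolding r_eq W.gr_star_sum by (simp add: star_X)

lemma YX:
  assumes n: "n \<ge> 2" and n': "n' \<ge> 2" and i: "i \<in> {1..n-1}" and j: "j \<in> {1..n'-1}"
  shows "M (M (q n) (tp (- int i))) (X n' j) = (if i = j \<and> n = n' then q n else gr_zero)"
proof -
  have "M (M (q n) (tp (- int i))) (X n' j) = M (M (M (q n) (tp (- int i))) (tp (int j))) (q n')"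
    unfolding X_def by (rule W.gr_mult_assoc[symmetric, OF Y_elem[OF n] gr_elem_tpow q_elem[OF n']])
  also have "M (M (q n) (tp (- int i))) (tp (int j)) = M (q n) (tp (int j - int i))"
    by (simp add: W.gr_mult_assoc q_elem n gr_elem_tpow tpow_mult)
  also have "M (M (q n) (tp (int j - int i))) (q n') = (if int j - int i = 0 \<and> n = n' then q n else gr_zero)"
    by (rule qtq) (use n n' i j in auto)
  finally show ?thesis by simp
qed

lemma rr_raw:
  assumes n: "n \<ge> 2" and n': "n' \<ge> 2"
  shows "M (gr_star (wreath G) (wr_r G e B m n)) (wr_r G e B m' n') =
    (if n = n' then (\<lambda>x. (\<Sum>i\<in>{1..n-1}. complex_of_real (B n m i * B n m' i)) * q n x) else gr_zero)"
proof -
  have "M (gr_star (wreath G) (wr_r G e B m n)) (wr_r G e B m' n') =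
      (\<lambda>x. \<Sum>i\<in>{1..n-1}. complex_of_real (B n m i) * M (M (q n) (tp (- int i))) (wr_r G e B m' n') x)"
    unfolding star_r[OF n] by (rule W.gr_mult_sum_left) (auto intro: Y_elem n)
  also have "\<dots> = (\<lambda>x. \<Sum>i\<in>{1..n-1}. complex_of_real (B n m i) *
      (\<Sum>j\<in>{1..n'-1}. complex_of_real (B n' m' j) * M (M (q n) (tp (- int i))) (X n' j) x))"
    unfolding r_eq by (subst W.gr_mult_sum_right) (auto intro: Y_elem n)
  also have "\<dots> = (\<lambda>x. \<Sum>i\<in>{1..n-1}. complex_of_real (B n m i) *
      (\<Sum>j\<in>{1..n'-1}. complex_of_real (B n' m' j) * (if i = j \<and> n = n' then q n x else 0)))"
    by (intro ext sum.cong refl arg_cong2[where f="(*)"]) (auto simp: YX n n' gr_zero_def)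
  also have "\<dots> = (if n = n' then (\<lambda>x. (\<Sum>i\<in>{1..n-1}. complex_of_real (B n m i * B n m' i)) * q n x) else gr_zero)"
  proof (cases "n = n'")
    case True
    show ?thesis using True
      by (auto simp: sum_distrib_right sum_distrib_left mult_ac if_distrib[of "\<lambda>x. _ * x"] cong: if_cong intro!: ext sum.cong)
  next
    case False
    thus ?thesis by (simp add: gr_zero_def)
  qed
  finally show ?thesis .
qed


lemma rr:
  assumes Bd: "diagonalizes B" and n: "n \<ge> 2" and n': "n' \<ge> 2" and m: "m \<in> {1..n-1}" and m': "m' \<in> {1..n'-1}"
  shows "M (gr_star (wreath G) (wr_r G e B m n)) (wr_r G e B m' n') = (if (m, n) = (m', n') then q n else gr_zero)"
proof (cases "n = n'")
  case True
  have "(\<Sum>i\<in>{1..n-1}. complex_of_real (B n m i * B n m' i)) = complex_of_real (\<Sum>i\<in>{1..n-1}. B n m i * B n m' i)"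
    by simp
  also have "(\<Sum>i\<in>{1..n-1}. B n m i * B n m' i) = (if m = m' then 1 else 0)"
    by (rule diagD(1)[OF Bd n m]) (use m' True in simp)
  finally show ?thesis unfolding rr_raw[OF n n'] using True by (auto simp: gr_zero_def)
next
  case False
  thus ?thesis unfolding rr_raw[OF n n'] by simp
qed

lemma Xq: "n \<ge> 2 \<Longrightarrow> M (X n i) (q n) = X n i"
  unfolding X_def by (simp add: W.gr_mult_assoc gr_elem_tpow q_elem q_idem)

lemma rq: assumes n: "n \<ge> 2" shows "M (wr_r G e B m n) (q n) = wr_r G e B m n"
proof -
  have "M (wr_r G e B m n) (q n) = (\<lambda>x. \<Sum>i\<in>{1..n-1}. complex_of_real (B n m i) * M (X n i) (q n) x)"
    unfolding r_eq by (rule W.gr_mult_sum_left) (auto intro: X_elem n)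
  thus ?thesis by (simp add: Xq n r_eq)
qed

lemma q_star_r: assumes n: "n \<ge> 2" shows "M (q n) (gr_star (wreath G) (wr_r G e B m n)) = gr_star (wreath G) (wr_r G e B m n)"
proof -
  have "gr_star (wreath G) (M (wr_r G e B m n) (q n)) = M (gr_star (wreath G) (q n)) (gr_star (wreath G) (wr_r G e B m n))"
    by (rule W.gr_star_mult[OF r_elem[OF n] q_elem[OF n]])
  thus ?thesis by (simp add: q_star n rq)
qed

lemma p_elem: "n \<ge> 2 \<Longrightarrow> gr_elem (wreath G) (wr_p G e B m n)"
  unfolding wr_p_def by (intro W.gr_elem_mult W.gr_elem_star r_elem)

lemma p_proj:
  assumes Bd: "diagonalizes B" and n: "n \<ge> 2" and m: "m \<in> {1..n-1}"
  shows "gr_projection (wreath G) (wr_p G e B m n)"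
proof -
  let ?r = "wr_r G e B m n" and ?s = "gr_star (wreath G) (wr_r G e B m n)"
  have re: "gr_elem (wreath G) ?r" and se: "gr_elem (wreath G) ?s" using r_elem[OF n] W.gr_elem_star by auto
  have "gr_star (wreath G) (wr_p G e B m n) = wr_p G e B m n"
    unfolding wr_p_def by (simp add: W.gr_star_mult re se W.gr_star_star)
  moreover have "M (wr_p G e B m n) (wr_p G e B m n) = wr_p G e B m n"
  proof -
    have "M (M ?r ?s) (M ?r ?s) = M ?r (M ?s (M ?r ?s))"
      by (rule W.gr_mult_assoc) (intro re se W.gr_elem_mult)+
    also have "M ?s (M ?r ?s) = M (M ?s ?r) ?s" by (rule W.gr_mult_assoc[symmetric]) (intro re se)+
    also have "M ?s ?r = q n" using rr[OF Bd n n m m] by simp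
    also have "M (q n) ?s = ?s" by (rule q_star_r[OF n])
    finally show ?thesis unfolding wr_p_def .
  qed
  ultimately show ?thesis using p_elem[OF n] by (simp add: gr_projection_def)
qed

lemma p_orth:
  assumes Bd: "diagonalizes B" and n: "n \<ge> 2" and m: "m \<in> {1..n-1}" and n': "n' \<ge> 2" and m': "m' \<in> {1..n'-1}"
    and ne: "(m, n) \<noteq> (m', n')"
  shows "M (wr_p G e B m n) (wr_p G e B m' n') = gr_zero"
proof -
  let ?r = "wr_r G e B m n" and ?s = "gr_star (wreath G) (wr_r G e B m n)"
  let ?r' = "wr_r G e B m' n'" and ?s' = "gr_star (wreath G) (wr_r G e B m' n')"
  have re: "gr_elem (wreath G) ?r" "gr_elem (wreath G) ?s" using r_elem[OF n] W.gr_elem_star by auto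
  have re': "gr_elem (wreath G) ?r'" "gr_elem (wreath G) ?s'" using r_elem[OF n'] W.gr_elem_star by auto
  have "M (M ?r ?s) (M ?r' ?s') = M ?r (M ?s (M ?r' ?s'))"
    by (rule W.gr_mult_assoc) (intro re re' W.gr_elem_mult)+
  also have "M ?s (M ?r' ?s') = M (M ?s ?r') ?s'" by (rule W.gr_mult_assoc[symmetric]) (intro re re')+
  also have "M ?s ?r' = gr_zero" by (subst rr[OF Bd n n' m m']) (rule if_not_P[OF ne])
  finally show ?thesis unfolding wr_p_def by (simp add: W.gr_zero_mult W.gr_mult_zero)
qed

lemma p_tr:
  assumes Bd: "diagonalizes B" and n: "n \<ge> 2" and m: "m \<in> {1..n-1}"
  shows "gr_tr (wreath G) (wr_p G e B m n) = gr_tr (wreath G) (q n)"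
  unfolding wr_p_def W.gr_tr_comm[OF r_elem[OF n] W.gr_elem_star[OF r_elem[OF n]]] using rr[OF Bd n n m m] by simp


lemma alpha_sum:
  fixes Z :: "nat \<Rightarrow> complex"
  assumes i: "i \<in> {1..n-1}"
  shows "(\<Sum>j\<in>{1..n-1}. complex_of_real (alphaA i j) * Z j) =
    (if i + 1 \<le> n - 1 then Z (i + 1) else 0) + (if 2 \<le> i then Z (i - 1) else 0)"
proof -
  have "(\<Sum>j\<in>{1..n-1}. complex_of_real (alphaA i j) * Z j) =
      (\<Sum>j\<in>{1..n-1}. (if j = i + 1 then Z j else 0) + (if j = i - 1 then Z j else 0))"
    using i by (intro sum.cong refl) (auto simp: alphaA_def)
  also have "\<dots> = (\<Sum>j\<in>{1..n-1}. if j = i + 1 then Z j else 0) + (\<Sum>j\<in>{1..n-1}. if j = i - 1 then Z j else 0)"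
    by (rule sum.distrib)
  also have "\<dots> = (if i + 1 \<le> n - 1 then Z (i + 1) else 0) + (if 2 \<le> i then Z (i - 1) else 0)"
  proof -
    have "(\<Sum>j\<in>{1..n-1}. if j = i - 1 then Z j else 0) = (if i - 1 \<in> {1..n-1} then Z (i - 1) else 0)"
      by (simp add: sum.delta)
    moreover have "(i - 1 \<in> {1..n-1}) = (2 \<le> i)" using i by auto
    moreover have "(\<Sum>j\<in>{1..n-1}. if j = i + 1 then Z j else 0) = (if i + 1 \<in> {1..n-1} then Z (i + 1) else 0)"
      by (simp add: sum.delta)
    moreover have "(i + 1 \<in> {1..n-1}) = (i + 1 \<le> n - 1)" using i by auto
    ultimately show ?thesis by simp
  qed
  finally show ?thesis .
qed

abbreviation E where "E \<equiv> gr_map G (wreath G) (wr_emb G) e"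

lemma E_elem: "gr_elem (wreath G) E"
  unfolding gr_map_emb[OF e_elem] by (rule gr_elem_ten) (auto simp: e_elem)

lemma wr_e_elem: "gr_elem (wreath G) (wr_e G e j)"
  unfolding wr_e_ten by (rule gr_elem_ten) (auto simp: e_elem)

lemma E_shift:
  assumes Y: "gr_elem (wreath G) Y"
  shows "M E (M (tp j) Y) = M (tp j) (M (wr_e G e j) Y)"
proof -
  have a: "gr_elem (wreath G) (M (tp (- j)) E)" by (intro W.gr_elem_mult gr_elem_tpow E_elem)
  have "M (wr_e G e j) Y = M (M (M (tp (- j)) E) (tp j)) Y" by (simp add: wr_e_def)
  also have "\<dots> = M (M (tp (- j)) E) (M (tp j) Y)" by (rule W.gr_mult_assoc[OF a gr_elem_tpow Y])
  also have "\<dots> = M (tp (- j)) (M E (M (tp j) Y))"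
    by (rule W.gr_mult_assoc[OF gr_elem_tpow E_elem W.gr_elem_mult[OF gr_elem_tpow Y]])
  finally have "M (tp j) (M (wr_e G e j) Y) = M (tp j) (M (tp (- j)) (M E (M (tp j) Y)))" by simp
  also have "\<dots> = M E (M (tp j) Y)" by (rule tp_cancel) (intro W.gr_elem_mult gr_elem_tpow E_elem Y)
  finally show ?thesis by simp
qed

lemma A1_elem: "gr_elem (wreath G) (M E (tp 1))" by (intro W.gr_elem_mult gr_elem_tpow E_elem)
lemma A2_elem: "gr_elem (wreath G) (M (tp (-1)) E)" by (intro W.gr_elem_mult gr_elem_tpow E_elem)

lemma A1X:
  assumes n: "n \<ge> 2" and i: "i \<in> {1..n-1}"
  shows "M (M E (tp 1)) (X n i) = (if i + 1 \<le> n - 1 then X n (i + 1) else gr_zero)"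
proof -
  have "M (M E (tp 1)) (X n i) = M E (M (tp 1) (M (tp (int i)) (q n)))"
    unfolding X_def by (rule W.gr_mult_assoc[OF E_elem gr_elem_tpow W.gr_elem_mult[OF gr_elem_tpow q_elem[OF n]]])
  also have "M (tp 1) (M (tp (int i)) (q n)) = M (tp (1 + int i)) (q n)"
    by (simp add: W.gr_mult_assoc[symmetric] gr_elem_tpow q_elem n tpow_mult)
  also have "M E (M (tp (1 + int i)) (q n)) = M (tp (1 + int i)) (M (wr_e G e (1 + int i)) (q n))"
    by (rule E_shift[OF q_elem[OF n]])
  also have "M (wr_e G e (1 + int i)) (q n) = (if 2 \<le> 1 + int i \<and> 1 + int i \<le> int n - 1 then q n else gr_zero)"
    by (rule e_q) (use n i in auto)
  finally show ?thesis using i n by (auto simp: X_def W.gr_mult_zero add.commute)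
qed

lemma A2X:
  assumes n: "n \<ge> 2" and i: "i \<in> {1..n-1}"
  shows "M (M (tp (-1)) E) (X n i) = (if 2 \<le> i then X n (i - 1) else gr_zero)"
proof -
  have "M (M (tp (-1)) E) (X n i) = M (tp (-1)) (M E (M (tp (int i)) (q n)))"
    unfolding X_def by (rule W.gr_mult_assoc[OF gr_elem_tpow E_elem W.gr_elem_mult[OF gr_elem_tpow q_elem[OF n]]])
  also have "M E (M (tp (int i)) (q n)) = M (tp (int i)) (M (wr_e G e (int i)) (q n))"
    by (rule E_shift[OF q_elem[OF n]])
  also have "M (wr_e G e (int i)) (q n) = (if 2 \<le> int i \<and> int i \<le> int n - 1 then q n else gr_zero)"
    by (rule e_q) (use n i in auto)
  also have "M (tp (-1)) (M (tp (int i)) (if 2 \<le> int i \<and> int i \<le> int n - 1 then q n else gr_zero)) =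
     M (tp (-1 + int i)) (if 2 \<le> int i \<and> int i \<le> int n - 1 then q n else gr_zero)"
    by (simp add: W.gr_mult_assoc[symmetric] gr_elem_tpow q_elem n tpow_mult W.gr_elem_zero)
  finally show ?thesis using i n by (auto simp: X_def W.gr_mult_zero of_nat_diff)
qed


lemma T_elem: "gr_elem (wreath G) (wr_T G e)"
  unfolding wr_T_def by (rule W.gr_elem_add[OF A1_elem A2_elem])

lemma Tr:
  assumes Bd: "diagonalizes B" and n: "n \<ge> 2" and m: "m \<in> {1..n-1}"
  shows "M (wr_T G e) (wr_r G e B m n) = gr_scale (complex_of_real (lam m n)) (wr_r G e B m n)"
proof (rule ext)
  fix x
  let ?I = "{1..n-1}"
  let ?c = "\<lambda>i. complex_of_real (B n m i)"
  have h0: "M (wr_T G e) (wr_r G e B m n) = gr_add (M (M E (tp 1)) (wr_r G e B m n)) (M (M (tp (-1)) E) (wr_r G e B m n))"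
    unfolding wr_T_def by (rule W.gr_mult_add_left[OF A1_elem A2_elem])
  have h1: "M (M E (tp 1)) (wr_r G e B m n) = (\<lambda>x. \<Sum>i\<in>?I. ?c i * M (M E (tp 1)) (X n i) x)"
    unfolding r_eq by (rule W.gr_mult_sum_right[OF _ A1_elem]) simp
  have h2: "M (M (tp (-1)) E) (wr_r G e B m n) = (\<lambda>x. \<Sum>i\<in>?I. ?c i * M (M (tp (-1)) E) (X n i) x)"
    unfolding r_eq by (rule W.gr_mult_sum_right[OF _ A2_elem]) simp
  have "M (wr_T G e) (wr_r G e B m n) x =
      (\<Sum>i\<in>?I. ?c i * M (M E (tp 1)) (X n i) x) + (\<Sum>i\<in>?I. ?c i * M (M (tp (-1)) E) (X n i) x)"
    unfolding h0 h1 h2 by (simp add: gr_add_def)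
  also have "\<dots> = (\<Sum>i\<in>?I. ?c i * ((if i + 1 \<le> n - 1 then X n (i + 1) x else 0) + (if 2 \<le> i then X n (i - 1) x else 0)))"
    unfolding sum.distrib[symmetric]
    by (intro sum.cong refl) (auto simp: A1X A2X n gr_zero_def algebra_simps)
  also have "\<dots> = (\<Sum>i\<in>?I. ?c i * (\<Sum>j\<in>?I. complex_of_real (alphaA i j) * X n j x))"
  proof (intro sum.cong refl)
    fix i assume i: "i \<in> ?I"
    show "?c i * ((if i + 1 \<le> n - 1 then X n (i + 1) x else 0) + (if 2 \<le> i then X n (i - 1) x else 0)) =
        ?c i * (\<Sum>j\<in>?I. complex_of_real (alphaA i j) * X n j x)"
      using alpha_sum[OF i, of "\<lambda>j. X n j x"] by simp
  qed
  also have "\<dots> = (\<Sum>j\<in>?I. (\<Sum>i\<in>?I. ?c i * complex_of_real (alphaA i j)) * X n j x)"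
    by (simp add: sum_distrib_left sum_distrib_right mult.assoc, rule sum.swap)
  also have "\<dots> = (\<Sum>j\<in>?I. complex_of_real (lam m n) * (?c j * X n j x))"
  proof (intro sum.cong refl)
    fix j assume j: "j \<in> ?I"
    have "(\<Sum>i\<in>?I. ?c i * complex_of_real (alphaA i j)) = complex_of_real (\<Sum>i\<in>?I. B n m i * alphaA i j)" by simp
    also have "\<dots> = complex_of_real (lam m n * B n m j)" by (simp only: eig[OF Bd n m j])
    finally show "(\<Sum>i\<in>?I. ?c i * complex_of_real (alphaA i j)) * X n j x = complex_of_real (lam m n) * (?c j * X n j x)"
      by simp
  qed
  also have "\<dots> = gr_scale (complex_of_real (lam m n)) (wr_r G e B m n) x"
    by (simp add: gr_scale_def r_eq sum_distrib_left)
  finally show "M (wr_T G e) (wr_r G e B m n) x = gr_scale (complex_of_real (lam m n)) (wr_r G e B m n) x" .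
qed

lemma Tp:
  assumes Bd: "diagonalizes B" and n: "n \<ge> 2" and m: "m \<in> {1..n-1}"
  shows "M (wr_T G e) (wr_p G e B m n) = gr_scale (complex_of_real (lam m n)) (wr_p G e B m n)"
proof -
  have "M (wr_T G e) (wr_p G e B m n) = M (M (wr_T G e) (wr_r G e B m n)) (gr_star (wreath G) (wr_r G e B m n))"
    unfolding wr_p_def by (rule W.gr_mult_assoc[symmetric, OF T_elem r_elem[OF n] W.gr_elem_star[OF r_elem[OF n]]])
  also have "\<dots> = gr_scale (complex_of_real (lam m n)) (wr_p G e B m n)"
    unfolding Tr[OF Bd n m] wr_p_def by (rule W.gr_mult_scale_left[OF r_elem[OF n]])
  finally show ?thesis .
qed


lemma tr_proj_sum:
  assumes a: "gr_elem G a" "gr_star G a = a" "gr_mult G a a = a"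
  shows "gr_tr G a = complex_of_real (\<Sum>y\<in>{y. a y \<noteq> 0}. (cmod (a y))\<^sup>2)"
proof -
  have "gr_tr G a = gr_tr G (gr_mult G a (gr_star G a))" using a by simp
  also have "\<dots> = (\<Sum>y\<in>{y. a y \<noteq> 0}. complex_of_real ((cmod (a y))\<^sup>2))" by (rule gr_tr_star_self[OF a(1)])
  finally show ?thesis by simp
qed

lemma tau_bounds:
  assumes n1: "e \<noteq> gr_one G"
  shows "norm (gr_tr G e) < 1" "gr_tr G fe = 1 - gr_tr G e"
proof -
  define t where "t = (\<Sum>y\<in>{y. e y \<noteq> 0}. (cmod (e y))\<^sup>2)"
  define t' where "t' = (\<Sum>y\<in>{y. fe y \<noteq> 0}. (cmod (fe y))\<^sup>2)"
  have te: "gr_tr G e = complex_of_real t" unfolding t_def by (rule tr_proj_sum[OF e_elem e_star ee])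
  have tf: "gr_tr G fe = complex_of_real t'" unfolding t'_def by (rule tr_proj_sum[OF fe_elem fe_star fefe])
  show ff: "gr_tr G fe = 1 - gr_tr G e"
    by (simp add: fe_def gr_tr_def gr_diff_def gr_one_def gr_of_def)
  have t0: "t \<ge> 0" unfolding t_def by (rule sum_nonneg) simp
  have "fe \<noteq> gr_zero"
  proof
    assume "fe = gr_zero"
    hence "e = gr_one G" by (auto simp: fe_def gr_diff_def gr_zero_def fun_eq_iff)
    thus False using n1 by simp
  qed
  then obtain y where y: "fe y \<noteq> 0" by (auto simp: gr_zero_def)
  have fin: "finite {y. fe y \<noteq> 0}" using gr_elemD(1)[OF fe_elem] .
  have "0 < (cmod (fe y))\<^sup>2" using y by simp
  also have "\<dots> \<le> t'" unfolding t'_def by (rule member_le_sum) (use y fin in auto)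
  finally have "t' > 0" .
  hence "t < 1" using te tf ff by (metis add_diff_cancel_right' diff_add_cancel diff_gt_0_iff_gt of_real_1 of_real_diff of_real_eq_iff)
  thus "norm (gr_tr G e) < 1" using te t0 by simp
qed

lemma sum_tr:
  assumes Bd: "diagonalizes B"
  shows "(\<Sum>m\<in>{1..n-1}. gr_tr (wreath G) (wr_p G e B m n)) =
    (if n \<ge> 2 then of_nat (n - 1) * (gr_tr G fe)\<^sup>2 * (gr_tr G e) ^ (n - 2) else 0)"
proof (cases "n \<ge> 2")
  case True
  have "(\<Sum>m\<in>{1..n-1}. gr_tr (wreath G) (wr_p G e B m n)) = (\<Sum>m\<in>{1..n-1}. (gr_tr G fe)\<^sup>2 * (gr_tr G e) ^ (n - 2))"
    by (intro sum.cong refl) (simp add: p_tr[OF Bd True] q_tr[OF True])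
  thus ?thesis using True by simp
next
  case False
  hence "{1..n-1} = {}" by auto
  thus ?thesis using False by simp
qed

end

theorem lemma3p3:
  fixes U :: "('u, 'z) monoid_scheme"
    and e :: "'u \<Rightarrow> complex"
    and B :: "nat \<Rightarrow> nat \<Rightarrow> nat \<Rightarrow> real"
  assumes grp: "group U"
    and torsion: "\<exists>u\<in>carrier U. u \<noteq> \<one>\<^bsub>U\<^esub> \<and> (\<exists>k::nat. k > 0 \<and> u [^]\<^bsub>U\<^esub> k = \<one>\<^bsub>U\<^esub>)"
    and proj: "gr_projection U e"
    and nz: "e \<noteq> gr_zero" and n1: "e \<noteq> gr_one U"
    and B: "diagonalizes B"
  shows "(\<forall>n\<ge>2. \<forall>m\<in>{1..n-1}. gr_projection (wreath U) (wr_p U e B m n))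
    \<and> (\<forall>n\<ge>2. \<forall>m\<in>{1..n-1}. \<forall>n'\<ge>2. \<forall>m'\<in>{1..n'-1}. (m, n) \<noteq> (m', n') \<longrightarrow>
          gr_mult (wreath U) (wr_p U e B m n) (wr_p U e B m' n') = gr_zero)
    \<and> (\<lambda>n. \<Sum>m\<in>{1..n-1}. gr_tr (wreath U) (wr_p U e B m n)) sums 1
    \<and> (\<forall>n\<ge>2. \<forall>m\<in>{1..n-1}. gr_mult (wreath U) (wr_T U e) (wr_p U e B m n)
          = gr_scale (complex_of_real (lam m n)) (wr_p U e B m n))"
proof -
  interpret wrp U e by (intro wrp.intro grp wrp_axioms.intro proj)
  have s: "(\<lambda>n. \<Sum>m\<in>{1..n-1}. gr_tr (wreath U) (wr_p U e B m n)) sums 1"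
    unfolding sum_tr[OF B] tau_bounds(2)[OF n1] by (rule series_aux[OF tau_bounds(1)[OF n1]])
  show ?thesis using p_proj[OF B] p_orth[OF B] s Tp[OF B] by blast
qed


end
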